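(* Let $\Sigma=(\mathcal X,\mathcal Y,M_U,M_D,\phi,\pi,H)$ be a control system with outputs which has the BIC property, for which $0\in\mathcal X$ is a robust equilibrium point from the input $u\in M_U$, and which is RFC from the input $u\in M_U$. Suppose there exist a function $V:\mathbb R^+\times\mathcal X\times U\to\mathbb R^+$ with $V(t,0,0)=0$ for all $t\ge0$, and functions $\gamma\in\mathcal N$, $\delta\in K^+$ such that, writing $W(t,t_0,x_0,u,d):=V(t,\phi(t,t_0,x_0,u,d),u(t))-\sup_{t_0\le\tau\le t}\gamma(\delta(\tau)\|u(\tau)\|_{\mathcal U})$: (P1) for every $s\ge0$, $T\ge0$: $\sup\{W(t,t_0,x_0,u,d): t\ge t_0,\ \|x_0\|_{\mathcal X}\le s,\ t_0\in[0,T],\ d\in M_D,\ u\in M_U\}<+\infty$; (P2) for every $\varepsilon>0$ and $T\ge0$ there exists $\eta=\eta(\varepsilon,T)>0$ such that $\sup\{W(t,t_0,x_0,u,d): t\ge t_0,\ \|x_0\|_{\mathcal X}\le\eta,\ t_0\in[0,T],\ d\in M_D,\ u\in M_U\}\le\varepsilon$; (P3) for every $\varepsilon>0$, $T\ge0$, $R\ge0$ there exists $\tau=\tau(\varepsilon,T,R)\ge0$ such that $\sup\{W(t,t_0,x_0,u,d): t\ge t_0+\tau,\ \|x_0\|_{\mathcal X}\le R,\ t_0\in[0,T],\ d\in M_D,\ u\in M_U\}\le\varepsilon$. Then there exist $\sigma\in KL$ and $\beta\in K^+$ such that for all $u\in M_U$, $(t_0,x_0,d)\in\mathbb R^+\times\mathcal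 X\times M_D$ and $t\ge t_0$: $$V(t,\phi(t,t_0,x_0,u,d),u(t))\le\sigma(\beta(t_0)\|x_0\|_{\mathcal X},t-t_0)+\sup_{t_0\le\tau\le t}\gamma(\delta(\tau)\|u(\tau)\|_{\mathcal U}).$$ Moreover, if there exists $a\in\mathcal N$ with $\|H(t,x,u)\|_{\mathcal Y}\le a(V(t,x,u))$ for all $(t,x,u)\in\mathbb R^+\times\mathcal X\times U$, then for every $\rho\in K_\infty$, $\Sigma$ satisfies the WIOS property from the input $u\in M_U$ with gain $\tilde\gamma\in\mathcal N$ and weight $\delta$, where $\tilde\gamma(s):=a(\gamma(s)+\rho(\gamma(s)))$.
   Context: Notation: $\mathbb R^+=[0,\infty)$. $K^+$: positive continuous functions on $\mathbb R^+$. $\mathcal N$: continuous non-decreasing $\rho:\mathbb R^+\to\mathbb R^+$ with $\rho(0)=0$. $K$: positive definite, increasing, continuous functions $\mathbb R^+\to\mathbb R^+$; $K_\infty$: those of class $K$ that are unbounded. $KL$: continuous $\sigma:\mathbb R^+\times\mathbb R^+\to\mathbb R^+$ with $\sigma(\cdot,t)\in K$ for each $t\ge0$ and $\sigma(s,\cdot)$ non-increasing with $\lim_{t\to\infty}\sigma(s,t)=0$ for each $s$. For a subset $U$ of a normed linear space $\mathcal U$ with $0\in U$, $\mathcal M(U)$ denotes the set of locally bounded functions $u:\mathbb R^+\to U$, $u_0$ the identically zero input, $B_U[0,r]=\{v\in U:\|v\|_{\mathcal U}\le r\}$. Control system with outputs $\Sigma=(\mathcal X,\mathcal Y,M_U,M_D,\phi,\pi,H)$: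 a set $U\subseteq\mathcal U$ ($0\in U$) and $M_U\subseteq\mathcal M(U)$ containing $u_0$; a set $D$ and $M_D\subseteq\mathcal M(D)$; normed linear spaces $\mathcal X,\mathcal Y$; a continuous $H:\mathbb R^+\times\mathcal X\times U\to\mathcal Y$ mapping bounded sets into bounded sets; a set-valued map $(t_0,x_0,u,d)\mapsto\pi(t_0,x_0,u,d)\subseteq[t_0,\infty)$ with $t_0\in\pi(t_0,x_0,u,d)$; a map $\phi:A_\phi\to\mathcal X$, $A_\phi\subseteq\mathbb R^+\times\mathbb R^+\times\mathcal X\times M_U\times M_D$, satisfying: (1) for each $(t_0,x_0,u,d)$ some $t>t_0$ has $[t_0,t]\times\{(t_0,x_0,u,d)\}\subseteq A_\phi$; (2) $\phi(t_0,t_0,x_0,u,d)=x_0$; (3) causality: if $(t,t_0,x_0,u,d)\in A_\phi$, $t>t_0$, and $(\tilde u,\tilde d)\in M_U\times M_D$ agrees with $(u,d)$ on $[t_0,t]$, then $(t,t_0,x_0,\tilde u,\tilde d)\in A_\phi$ and $\phi(t,t_0,x_0,u,d)=\phi(t,t_0,x_0,\tilde u,\tilde d)$; (4) weak semigroup property: there is $r>0$ such that for each $t\ge t_0$ with $(t,t_0,x_0,u,d)\in A_\phi$: (a) $(\tau,t_0,x_0,u,d)\in A_\phi$ for $\tau\in[t_0,t]$; (b) $\phi(t,\tau,\phi(\tau,t_0,x_0,u,d),u,d)=\phi(t,t_0,x_0,u,d)$ for $\tau\in[t_0,t]\cap\pi(t_0,x_0,u,d)$; (c) if $(t+r,t_0,x_0,u,d)\in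 A_\phi$ then $\pi(t_0,x_0,u,d)\cap[t,t+r]\ne\emptyset$; (d) for $\tau\in\pi(t_0,x_0,u,d)$ with $(\tau,t_0,x_0,u,d)\in A_\phi$, $\pi(\tau,\phi(\tau,t_0,x_0,u,d),u,d)=\pi(t_0,x_0,u,d)\cap[\tau,\infty)$. BIC property: for each $(t_0,x_0,u,d)$ there is $t_{\max}\in(t_0,+\infty]$ with $A_\phi=\bigcup[t_0,t_{\max})\times\{(t_0,x_0,u,d)\}$, and if $t_{\max}<\infty$ then $\phi(\cdot,t_0,x_0,u,d)$ is unbounded in norm on $[t_0,t_{\max})$. RFC from the input $u\in M_U$: BIC and for all $r,T\ge0$, $\sup\{\|\phi(t_0+s,t_0,x_0,u,d)\|_{\mathcal X}: u\in\mathcal M(B_U[0,r])\cap M_U, s\in[0,T],\|x_0\|_{\mathcal X}\le r,t_0\in[0,T],d\in M_D\}<\infty$. Robust equilibrium point from the input $u\in M_U$: $H(t,0,0)=0$ for all $t\ge0$; (i) $\phi(t,t_0,0,u_0,d)=0$ for all $t\ge t_0\ge0$, $d\in M_D$; (ii) for every $\varepsilon>0$, $T,h\ge0$ there is $\eta>0$ such that for all $t_0\in[0,T]$, $x\in\mathcal X$, $u\in M_U$ with $\|x\|_{\mathcal X}+\sup_{t\ge0}\|u(t)\|_{\mathcal U}<\eta$, all $\tau\in[t_0,t_0+h]$ and $d\in M_D$: $(\tau,t_0,x,u,d)\in A_\phi$ and $\|\phi(\tau,t_0,x,u,d)\|_{\mathcal X}<\varepsilon$. WIOS: for $\Sigma$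 with BIC, RFC from $u$, and $0$ a robust equilibrium point from $u$, $\Sigma$ satisfies the Weighted Input-to-Output Stability (WIOS) property from the input $u\in M_U$ with gain $\gamma\in\mathcal N$ and weight $\delta\in K^+$ if there exist $\sigma\in KL$, $\beta\in K^+$ such that for all $u\in M_U$, $(t_0,x_0,d)\in\mathbb R^+\times\mathcal X\times M_D$, $t\ge t_0$: $\|H(t,\phi(t,t_0,x_0,u,d),u(t))\|_{\mathcal Y}\le\sigma(\beta(t_0)\|x_0\|_{\mathcal X},t-t_0)+\sup_{t_0\le\tau\le t}\gamma(\delta(\tau)\|u(\tau)\|_{\mathcal U})$. *)

theory Defs
  imports "HOL-Analysis.Analysis"
begin

definition classKplus :: "(real \<Rightarrow> real) \<Rightarrow> bool" where
  "classKplus f \<longleftrightarrow> continuous_on {0..} f \<and> (\<forall>t\<ge>0. f t > 0)"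

definition classN :: "(real \<Rightarrow> real) \<Rightarrow> bool" where
  "classN \<rho> \<longleftrightarrow> continuous_on {0..} \<rho> \<and> mono_on {0..} \<rho> \<and> \<rho> 0 = 0
     \<and> (\<forall>s\<ge>0. \<rho> s \<ge> 0)"

definition classK :: "(real \<Rightarrow> real) \<Rightarrow> bool" where
  "classK \<rho> \<longleftrightarrow> continuous_on {0..} \<rho> \<and> strict_mono_on {0..} \<rho> \<and> \<rho> 0 = 0
     \<and> (\<forall>s>0. \<rho> s > 0)"

definition classKinf :: "(real \<Rightarrow> real) \<Rightarrow> bool" where
  "classKinf \<rho> \<longleftrightarrow> classK \<rho> \<and> \<not> bdd_above (\<rho> ` {0..})"

definition classKL :: "(real \<Rightarrow> real \<Rightarrow> real) \<Rightarrow> bool" where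
  "classKL \<sigma> \<longleftrightarrow> continuous_on ({0..} \<times> {0..}) (\<lambda>(s,t). \<sigma> s t)
     \<and> (\<forall>t\<ge>0. classK (\<lambda>s. \<sigma> s t))
     \<and> (\<forall>s\<ge>0. antimono_on {0..} (\<sigma> s) \<and> ((\<sigma> s) \<longlongrightarrow> 0) at_top)"

text \<open>M(U): locally bounded functions R+ -> U (values at negative times are irrelevant).\<close>
definition locbdd_fun :: "'u::real_normed_vector set \<Rightarrow> (real \<Rightarrow> 'u) set" where
  "locbdd_fun U = {u. (\<forall>t\<ge>0. u t \<in> U) \<and> (\<forall>T\<ge>0. bounded (u ` {0..T}))}"

definition fun_into :: "'d set \<Rightarrow> (real \<Rightarrow> 'd) set" where
  "fun_into D = {d. \<forall>t\<ge>0. d t \<in> D}"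

definition zero_input :: "real \<Rightarrow> 'u::zero" where
  "zero_input = (\<lambda>t. 0)"

text \<open>Tuples in A_phi are (t, t0, x0, u, d); phi t t0 x0 u d; pi t0 x0 u d.\<close>

definition control_system ::
  "'u::real_normed_vector set \<Rightarrow> (real \<Rightarrow> 'u) set \<Rightarrow> 'd set \<Rightarrow> (real \<Rightarrow> 'd) set
   \<Rightarrow> (real \<Rightarrow> real \<Rightarrow> 'x::real_normed_vector \<Rightarrow> (real \<Rightarrow> 'u) \<Rightarrow> (real \<Rightarrow> 'd) \<Rightarrow> 'x)
   \<Rightarrow> (real \<times> real \<times> 'x \<times> (real \<Rightarrow> 'u) \<times> (real \<Rightarrow> 'd)) set
   \<Rightarrow> (real \<Rightarrow> 'x \<Rightarrow> (real \<Rightarrow> 'u) \<Rightarrow> (real \<Rightarrow> 'd) \<Rightarrow> real set)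
   \<Rightarrow> (real \<Rightarrow> 'x \<Rightarrow> 'u \<Rightarrow> 'y::real_normed_vector) \<Rightarrow> bool" where
  "control_system U MU D MD \<phi> A\<phi> \<pi> H \<longleftrightarrow>
     0 \<in> U \<and> MU \<subseteq> locbdd_fun U \<and> zero_input \<in> MU \<and> MD \<subseteq> fun_into D
   \<and> continuous_on ({0..} \<times> UNIV \<times> U) (\<lambda>(t,x,v). H t x v)
   \<and> (\<forall>S. S \<subseteq> {0..} \<times> UNIV \<times> U \<and> bounded S \<longrightarrow> bounded ((\<lambda>(t,x,v). H t x v) ` S))
   \<and> A\<phi> \<subseteq> {(t,t0,x0,u,d). t \<ge> 0 \<and> t0 \<ge> 0 \<and> u \<in> MU \<and> d \<in> MD}
   \<and> (\<forall>t0\<ge>0. \<forall>x0. \<forall>u\<in>MU. \<forall>d\<in>MD.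
        \<pi> t0 x0 u d \<subseteq> {t0..} \<and> t0 \<in> \<pi> t0 x0 u d
      \<and> (\<exists>t>t0. \<forall>s\<in>{t0..t}. (s,t0,x0,u,d) \<in> A\<phi>)
      \<and> \<phi> t0 t0 x0 u d = x0)
   \<and> (\<forall>t t0 x0 u d u' d'. (t,t0,x0,u,d) \<in> A\<phi> \<and> t > t0 \<and> u' \<in> MU \<and> d' \<in> MD
        \<and> (\<forall>s\<in>{t0..t}. u' s = u s \<and> d' s = d s)
        \<longrightarrow> (t,t0,x0,u',d') \<in> A\<phi> \<and> \<phi> t t0 x0 u d = \<phi> t t0 x0 u' d')
   \<and> (\<exists>r>0. \<forall>t0\<ge>0. \<forall>x0. \<forall>u\<in>MU. \<forall>d\<in>MD. \<forall>t\<ge>t0. (t,t0,x0,u,d) \<in> A\<phi> \<longrightarrow>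
        (\<forall>\<tau>\<in>{t0..t}. (\<tau>,t0,x0,u,d) \<in> A\<phi>)
      \<and> (\<forall>\<tau>\<in>{t0..t} \<inter> \<pi> t0 x0 u d. \<phi> t \<tau> (\<phi> \<tau> t0 x0 u d) u d = \<phi> t t0 x0 u d)
      \<and> ((t + r,t0,x0,u,d) \<in> A\<phi> \<longrightarrow> \<pi> t0 x0 u d \<inter> {t..t+r} \<noteq> {})
      \<and> (\<forall>\<tau>\<in>\<pi> t0 x0 u d. (\<tau>,t0,x0,u,d) \<in> A\<phi> \<longrightarrow>
            \<pi> \<tau> (\<phi> \<tau> t0 x0 u d) u d = \<pi> t0 x0 u d \<inter> {\<tau>..}))"

definition BIC :: "(real \<Rightarrow> 'u) set \<Rightarrow> (real \<Rightarrow> 'd) set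
   \<Rightarrow> (real \<Rightarrow> real \<Rightarrow> 'x::real_normed_vector \<Rightarrow> (real \<Rightarrow> 'u) \<Rightarrow> (real \<Rightarrow> 'd) \<Rightarrow> 'x)
   \<Rightarrow> (real \<times> real \<times> 'x \<times> (real \<Rightarrow> 'u) \<times> (real \<Rightarrow> 'd)) set \<Rightarrow> bool" where
  "BIC MU MD \<phi> A\<phi> \<longleftrightarrow>
     (\<forall>t0\<ge>0. \<forall>x0. \<forall>u\<in>MU. \<forall>d\<in>MD.
        (\<forall>t. (t,t0,x0,u,d) \<in> A\<phi> \<longleftrightarrow> t0 \<le> t)
      \<or> (\<exists>tmax>t0. (\<forall>t. (t,t0,x0,u,d) \<in> A\<phi> \<longleftrightarrow> t0 \<le> t \<and> t < tmax)
            \<and> \<not> bounded ((\<lambda>t. \<phi> t t0 x0 u d) ` {t0..<tmax})))"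

definition RFC :: "'u::real_normed_vector set \<Rightarrow> (real \<Rightarrow> 'u) set \<Rightarrow> (real \<Rightarrow> 'd) set
   \<Rightarrow> (real \<Rightarrow> real \<Rightarrow> 'x::real_normed_vector \<Rightarrow> (real \<Rightarrow> 'u) \<Rightarrow> (real \<Rightarrow> 'd) \<Rightarrow> 'x)
   \<Rightarrow> (real \<times> real \<times> 'x \<times> (real \<Rightarrow> 'u) \<times> (real \<Rightarrow> 'd)) set \<Rightarrow> bool" where
  "RFC U MU MD \<phi> A\<phi> \<longleftrightarrow> BIC MU MD \<phi> A\<phi> \<and>
     (\<forall>r\<ge>0. \<forall>T\<ge>0. bdd_above
        {norm (\<phi> (t0 + s) t0 x0 u d) | s t0 x0 u d.
           u \<in> locbdd_fun (U \<inter> cball 0 r) \<inter> MU \<and> s \<in> {0..T} \<and> norm x0 \<le> r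
           \<and> t0 \<in> {0..T} \<and> d \<in> MD \<and> (t0 + s,t0,x0,u,d) \<in> A\<phi>})"

definition robust_equilibrium :: "(real \<Rightarrow> 'u::real_normed_vector) set \<Rightarrow> (real \<Rightarrow> 'd) set
   \<Rightarrow> (real \<Rightarrow> real \<Rightarrow> 'x::real_normed_vector \<Rightarrow> (real \<Rightarrow> 'u) \<Rightarrow> (real \<Rightarrow> 'd) \<Rightarrow> 'x)
   \<Rightarrow> (real \<times> real \<times> 'x \<times> (real \<Rightarrow> 'u) \<times> (real \<Rightarrow> 'd)) set
   \<Rightarrow> (real \<Rightarrow> 'x \<Rightarrow> 'u \<Rightarrow> 'y::real_normed_vector) \<Rightarrow> bool" where
  "robust_equilibrium MU MD \<phi> A\<phi> H \<longleftrightarrow>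
     (\<forall>t\<ge>0. H t 0 0 = 0)
   \<and> (\<forall>t0\<ge>0. \<forall>t\<ge>t0. \<forall>d\<in>MD. (t,t0,0,zero_input,d) \<in> A\<phi> \<and> \<phi> t t0 0 zero_input d = 0)
   \<and> (\<forall>\<epsilon>>0. \<forall>T\<ge>0. \<forall>h\<ge>0. \<exists>\<eta>>0. \<forall>t0\<in>{0..T}. \<forall>x. \<forall>u\<in>MU.
        bdd_above ((\<lambda>t. norm (u t)) ` {0..}) \<and> norm x + (SUP t\<in>{0..}. norm (u t)) < \<eta>
        \<longrightarrow> (\<forall>\<tau>\<in>{t0..t0+h}. \<forall>d\<in>MD. (\<tau>,t0,x,u,d) \<in> A\<phi> \<and> norm (\<phi> \<tau> t0 x u d) < \<epsilon>))"

text \<open>Weighted Input-to-Output Stability (the estimate is required wherever the solution is defined).\<close>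
definition WIOS :: "'u::real_normed_vector set \<Rightarrow> (real \<Rightarrow> 'u) set \<Rightarrow> (real \<Rightarrow> 'd) set
   \<Rightarrow> (real \<Rightarrow> real \<Rightarrow> 'x::real_normed_vector \<Rightarrow> (real \<Rightarrow> 'u) \<Rightarrow> (real \<Rightarrow> 'd) \<Rightarrow> 'x)
   \<Rightarrow> (real \<times> real \<times> 'x \<times> (real \<Rightarrow> 'u) \<times> (real \<Rightarrow> 'd)) set
   \<Rightarrow> (real \<Rightarrow> 'x \<Rightarrow> 'u \<Rightarrow> 'y::real_normed_vector)
   \<Rightarrow> (real \<Rightarrow> real) \<Rightarrow> (real \<Rightarrow> real) \<Rightarrow> bool" where
  "WIOS U MU MD \<phi> A\<phi> H \<gamma> \<delta> \<longleftrightarrow>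
     BIC MU MD \<phi> A\<phi> \<and> RFC U MU MD \<phi> A\<phi> \<and> robust_equilibrium MU MD \<phi> A\<phi> H
   \<and> classN \<gamma> \<and> classKplus \<delta>
   \<and> (\<exists>\<sigma> \<beta>. classKL \<sigma> \<and> classKplus \<beta> \<and>
        (\<forall>u\<in>MU. \<forall>t0\<ge>0. \<forall>x0. \<forall>d\<in>MD. \<forall>t\<ge>t0. (t,t0,x0,u,d) \<in> A\<phi> \<longrightarrow>
           norm (H t (\<phi> t t0 x0 u d) (u t))
             \<le> \<sigma> (\<beta> t0 * norm x0) (t - t0) + (SUP \<tau>\<in>{t0..t}. \<gamma> (\<delta> \<tau> * norm (u \<tau>)))))"

end

theory Submission
  imports Defs
begin


definition pl :: "(int \<Rightarrow> real) \<Rightarrow> real \<Rightarrow> real" where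
  "pl c t = c \<lfloor>t\<rfloor> + (t - of_int \<lfloor>t\<rfloor>) * (c (\<lfloor>t\<rfloor> + 1) - c \<lfloor>t\<rfloor>)"

lemma pl_on_interval:
  assumes "of_int k \<le> t" "t \<le> of_int k + 1"
  shows "pl c t = c k + (t - of_int k) * (c (k + 1) - c k)"
proof (cases "t = of_int k + 1")
  case True
  then have "\<lfloor>t\<rfloor> = k + 1" by simp
  then show ?thesis using True by (simp add: pl_def)
next
  case False
  then have "\<lfloor>t\<rfloor> = k" using assms by (simp add: floor_eq_iff)
  then show ?thesis by (simp add: pl_def)
qed

lemma pl_cont_interval: "continuous_on {of_int k..of_int k + 1} (pl c)"
proof -
  have "continuous_on {of_int k..of_int k + 1} (\<lambda>t. c k + (t - of_int k) * (c (k + 1) - c k))"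
    by (intro continuous_intros)
  then show ?thesis
    by (rule continuous_on_eq) (auto simp: pl_on_interval)
qed

lemma pl_isCont: "isCont (pl c) t"
proof -
  define k where "k = \<lfloor>t\<rfloor>"
  have "continuous_on ({of_int (k-1)..of_int (k-1) + 1} \<union> {of_int k..of_int k + 1}) (pl c)"
    by (intro continuous_on_closed_Un pl_cont_interval) auto
  moreover have "{of_int (k-1)..of_int (k-1) + 1} \<union> {of_int k..of_int k + 1} = {of_int k - 1..of_int k + (1::real)}"
    by auto
  moreover have "t \<in> interior {of_int k - 1..of_int k + (1::real)}"
    using k_def by (simp add: floor_le_iff) linarith
  ultimately show ?thesis by (metis continuous_on_interior)
qed

lemma pl_cont: "continuous_on S (pl c)"
  by (simp add: continuous_at_imp_continuous_on pl_isCont)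

lemma pl_bounds:
  "min (c \<lfloor>t\<rfloor>) (c (\<lfloor>t\<rfloor>+1)) \<le> pl c t" "pl c t \<le> max (c \<lfloor>t\<rfloor>) (c (\<lfloor>t\<rfloor>+1))"
proof -
  define \<theta> where "\<theta> = t - of_int \<lfloor>t\<rfloor>"
  have th: "0 \<le> \<theta>" "\<theta> \<le> 1" unfolding \<theta>_def by linarith+
  have e: "pl c t = (1 - \<theta>) * c \<lfloor>t\<rfloor> + \<theta> * c (\<lfloor>t\<rfloor>+1)"
    unfolding pl_def \<theta>_def by (simp add: algebra_simps)
  show "min (c \<lfloor>t\<rfloor>) (c (\<lfloor>t\<rfloor>+1)) \<le> pl c t"
  proof -
    let ?m = "min (c \<lfloor>t\<rfloor>) (c (\<lfloor>t\<rfloor>+1))"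
    have "(1 - \<theta>) * ?m \<le> (1 - \<theta>) * c \<lfloor>t\<rfloor>" using th by (intro mult_left_mono) auto
    moreover have "\<theta> * ?m \<le> \<theta> * c (\<lfloor>t\<rfloor>+1)" using th by (intro mult_left_mono) auto
    ultimately show ?thesis unfolding e by (simp add: algebra_simps)
  qed
  show "pl c t \<le> max (c \<lfloor>t\<rfloor>) (c (\<lfloor>t\<rfloor>+1))"
  proof -
    let ?m = "max (c \<lfloor>t\<rfloor>) (c (\<lfloor>t\<rfloor>+1))"
    have "(1 - \<theta>) * ?m \<ge> (1 - \<theta>) * c \<lfloor>t\<rfloor>" using th by (intro mult_left_mono) auto
    moreover have "\<theta> * ?m \<ge> \<theta> * c (\<lfloor>t\<rfloor>+1)" using th by (intro mult_left_mono) auto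
    ultimately show ?thesis unfolding e by (simp add: algebra_simps)
  qed
qed

lemma pl_mono_lower: "mono c \<Longrightarrow> c \<lfloor>t\<rfloor> \<le> pl c t"
  using pl_bounds(1)[of c t] by (metis min.absorb1 monoD le_add_same_cancel1 zero_le_one)
lemma pl_mono_upper: "mono c \<Longrightarrow> pl c t \<le> c (\<lfloor>t\<rfloor>+1)"
  using pl_bounds(2)[of c t] by (metis max.absorb2 monoD le_add_same_cancel1 zero_le_one)
lemma pl_anti_lower: "antimono c \<Longrightarrow> c (\<lfloor>t\<rfloor>+1) \<le> pl c t"
  using pl_bounds(1)[of c t] by (metis min.absorb2 antimonoD le_add_same_cancel1 zero_le_one)
lemma pl_anti_upper: "antimono c \<Longrightarrow> pl c t \<le> c \<lfloor>t\<rfloor>"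
  using pl_bounds(2)[of c t] by (metis max.absorb1 antimonoD le_add_same_cancel1 zero_le_one)

lemma pl_mono: assumes "mono c" shows "mono (pl c)"
proof (rule monoI)
  fix x y :: real assume xy: "x \<le> y"
  show "pl c x \<le> pl c y"
  proof (cases "\<lfloor>x\<rfloor> = \<lfloor>y\<rfloor>")
    case True
    have "c \<lfloor>x\<rfloor> \<le> c (\<lfloor>x\<rfloor>+1)" using assms by (simp add: monoD)
    then show ?thesis unfolding pl_def True using xy
      by (simp add: mult_right_mono)
  next
    case False
    then have "\<lfloor>x\<rfloor> + 1 \<le> \<lfloor>y\<rfloor>" using xy by (meson floor_mono le_less zless_imp_add1_zle)
    then have "c (\<lfloor>x\<rfloor>+1) \<le> c \<lfloor>y\<rfloor>" using assms by (simp add: monoD)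
    then show ?thesis using pl_mono_upper[OF assms, of x] pl_mono_lower[OF assms, of y] by linarith
  qed
qed

lemma pl_uminus: "pl (\<lambda>k. - c k) t = - pl c t"
  by (simp add: pl_def algebra_simps)

lemma pl_antimono: assumes "antimono c" shows "antimono (pl c)"
proof -
  have "mono (\<lambda>k. - c k)" using assms by (simp add: antimono_def monoI)
  then have "mono (pl (\<lambda>k. - c k))" by (rule pl_mono)
  show ?thesis
  proof (rule antimonoI)
    fix x y :: real assume "x \<le> y"
    then have "pl (\<lambda>k. - c k) x \<le> pl (\<lambda>k. - c k) y" using \<open>mono (pl (\<lambda>k. - c k))\<close> by (rule monoD[rotated])
    then show "pl c y \<le> pl c x" by (simp add: pl_uminus)
  qed
qed



lemma kappa_exists:
  fixes S :: "(real \<times> real \<times> real) set"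
  assumes S0: "\<And>r h w. (r,h,w) \<in> S \<Longrightarrow> r \<ge> 0"
    and F1: "\<And>R. \<exists>B. \<forall>r h w. (r,h,w) \<in> S \<and> r \<le> R \<longrightarrow> w \<le> B"
    and F2: "\<And>\<epsilon>. \<epsilon> > 0 \<Longrightarrow> \<exists>\<rho>>0. \<forall>r h w. (r,h,w) \<in> S \<and> r \<le> \<rho> \<longrightarrow> w \<le> \<epsilon>"
  shows "\<exists>\<kappa>. continuous_on {0..} \<kappa> \<and> strict_mono_on {0..} \<kappa> \<and> \<kappa> 0 = 0
           \<and> (\<forall>r h w. (r,h,w) \<in> S \<longrightarrow> w \<le> \<kappa> r)"
proof -
  define D where "D R = Sup (insert 0 {w | r h w. (r,h,w) \<in> S \<and> r \<le> R})" for R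
  have bdd: "bdd_above (insert 0 {w | r h w. (r,h,w) \<in> S \<and> r \<le> R})" for R
  proof -
    obtain B where "\<forall>r h w. (r,h,w) \<in> S \<and> r \<le> R \<longrightarrow> w \<le> B" using F1 by blast
    then show ?thesis by (intro bdd_aboveI[where M="max 0 B"]) (force simp: le_max_iff_disj)
  qed
  have D_ge: "w \<le> D R" if "(r,h,w) \<in> S" "r \<le> R" for r h w R
    unfolding D_def using that by (intro cSup_upper bdd) auto
  have D_nn: "0 \<le> D R" for R
    unfolding D_def by (intro cSup_upper bdd) auto
  have D_mono: "D R \<le> D R'" if "R \<le> R'" for R R'
    unfolding D_def using that by (intro cSup_subset_mono bdd) auto
  have D_small: "\<exists>\<rho>>0. \<forall>R\<le>\<rho>. D R \<le> \<epsilon>" if e0: "\<epsilon> > 0" for \<epsilon>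
  proof -
    obtain \<rho> where \<rho>: "\<rho> > 0" "\<forall>r h w. (r,h,w) \<in> S \<and> r \<le> \<rho> \<longrightarrow> w \<le> \<epsilon>" using F2[OF e0] by blast
    have "D R \<le> \<epsilon>" if "R \<le> \<rho>" for R
      unfolding D_def
    proof (intro cSup_least)
      fix x assume "x \<in> insert 0 {w | r h w. (r,h,w) \<in> S \<and> r \<le> R}"
      then show "x \<le> \<epsilon>" using that \<rho> e0 by auto (meson order.trans)
    qed auto
    then show ?thesis using \<rho> by blast
  qed
  define c where "c k = D (exp (of_int k + 1))" for k :: int
  define G where "G = pl c"
  have c_mono: "mono c" unfolding c_def by (intro monoI D_mono) simp
  have G_mono: "mono G" unfolding G_def by (rule pl_mono[OF c_mono])
  have G_lower: "D (exp s) \<le> G s" for s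
  proof -
    have "D (exp s) \<le> c \<lfloor>s\<rfloor>" unfolding c_def by (intro D_mono) (simp; linarith)
    then show ?thesis unfolding G_def using pl_mono_lower[OF c_mono, of s] by linarith
  qed
  have G_upper: "G s \<le> D (exp 2 * exp s)" for s
  proof -
    have e2: "exp 2 * exp s = exp (2 + s)" by (simp add: exp_add)
    have "exp (of_int (\<lfloor>s\<rfloor>+1) + 1) \<le> exp (2 + s)" by simp
    then have "c (\<lfloor>s\<rfloor>+1) \<le> D (exp 2 * exp s)" unfolding c_def e2
      by (intro D_mono)
    then show ?thesis unfolding G_def using pl_mono_upper[OF c_mono, of s] by linarith
  qed
  have G_nn: "0 \<le> G s" for s using G_lower[of s] D_nn[of "exp s"] by linarith
  have G_cont: "continuous_on A G" for A unfolding G_def by (rule pl_cont)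
  define \<kappa> where "\<kappa> r = (if r \<le> 0 then 0 else r + G (ln r))" for r
  have "continuous (at x within {0..}) \<kappa>" if "x \<in> {0..}" for x
  proof (cases "x = 0")
    case False
    with that have x: "x > 0" by simp
    have "continuous_on {0<..} (\<lambda>r. r + G (ln r))"
      by (intro continuous_intros continuous_on_compose2[OF G_cont]) auto
    then have "continuous_on {0<..} \<kappa>"
      by (rule continuous_on_eq) (auto simp: \<kappa>_def)
    then have "isCont \<kappa> x" using x by (intro continuous_on_interior[of "{0<..}"]) (auto simp: interior_open)
    then show ?thesis by (rule continuous_at_imp_continuous_at_within)
  next
    case True
    show ?thesis unfolding continuous_within_eps_delta True
    proof (intro allI impI)
      fix e :: real assume e: "e > 0"
      obtain \<rho> where \<rho>: "\<rho> > 0" "\<forall>R\<le>\<rho>. D R \<le> e/2" using D_small[of "e/2"] e by auto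
      define d where "d = min (e/2) (\<rho> / exp 2)"
      have d: "d > 0" using e \<rho> by (simp add: d_def)
      have "dist (\<kappa> r) (\<kappa> 0) < e" if r: "r \<in> {0..}" "dist r 0 < d" for r
      proof (cases "r = 0")
        case True then show ?thesis using e by (simp add: \<kappa>_def)
      next
        case False
        then have r0: "r > 0" using r by simp
        have rd: "r < d" using r r0 by simp
        have "exp 2 * r \<le> \<rho>" using rd unfolding d_def
          by (simp add: field_simps)
        then have "D (exp 2 * exp (ln r)) \<le> e/2" using \<rho> r0 by simp
        then have "G (ln r) \<le> e/2" using G_upper[of "ln r"] by linarith
        moreover have "r < e/2" using rd d_def by simp
        ultimately show ?thesis using r0 G_nn[of "ln r"] by (simp add: \<kappa>_def dist_real_def)
      qed
      then show "\<exists>d>0. \<forall>x'\<in>{0..}. dist x' 0 < d \<longrightarrow> dist (\<kappa> x') (\<kappa> 0) < e"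
        using d by blast
    qed
  qed
  then have cont: "continuous_on {0..} \<kappa>" by (simp add: continuous_on_eq_continuous_within)
  have sm: "strict_mono_on {0..} \<kappa>"
  proof (rule strict_mono_onI)
    fix r s :: real assume rs: "r \<in> {0..}" "s \<in> {0..}" "r < s"
    show "\<kappa> r < \<kappa> s"
    proof (cases "r = 0")
      case True then show ?thesis using rs G_nn[of "ln s"] by (simp add: \<kappa>_def)
    next
      case False
      then have "r > 0" using rs by simp
      then have "G (ln r) \<le> G (ln s)" using rs by (intro monoD[OF G_mono]) simp
      then show ?thesis using rs \<open>r > 0\<close> by (simp add: \<kappa>_def)
    qed
  qed
  have bound: "w \<le> \<kappa> r" if "(r,h,w) \<in> S" for r h w
  proof (cases "r = 0")
    case True
    have "w \<le> e" if e0: "e > 0" for e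
    proof -
      obtain \<rho> where "\<rho> > 0" "\<forall>r h w. (r,h,w) \<in> S \<and> r \<le> \<rho> \<longrightarrow> w \<le> e" using F2[OF e0] by blast
      then have "(0,h,w) \<in> S \<and> 0 \<le> \<rho> \<longrightarrow> w \<le> e" by blast
      then show ?thesis using \<open>(r,h,w) \<in> S\<close> True \<open>\<rho> > 0\<close> by auto
    qed
    then have "w \<le> 0" by (meson dense not_le)
    then show ?thesis using True by (simp add: \<kappa>_def)
  next
    case False
    then have r0: "r > 0" using S0[OF that] by simp
    have "w \<le> D (exp (ln r))" using D_ge[OF that] r0 by simp
    also have "\<dots> \<le> G (ln r)" by (rule G_lower)
    finally show ?thesis using r0 by (simp add: \<kappa>_def)
  qed
  show ?thesis using cont sm bound by (intro exI[of _ \<kappa>]) (auto simp: \<kappa>_def)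
qed



lemma psi_exists:
  fixes S :: "(real \<times> real \<times> real) set"
  assumes F1: "\<And>R. \<exists>B. \<forall>r h w. (r,h,w) \<in> S \<and> r \<le> R \<longrightarrow> w \<le> B"
    and F3: "\<And>\<epsilon> R. \<epsilon> > 0 \<Longrightarrow> \<exists>T. \<forall>r h w. (r,h,w) \<in> S \<and> r \<le> R \<and> T \<le> h \<longrightarrow> w \<le> \<epsilon>"
  shows "\<exists>\<mu> \<tau>. continuous_on UNIV \<mu> \<and> continuous_on UNIV \<tau> \<and> antimono \<mu> \<and> mono \<tau>
           \<and> (\<forall>s. 0 \<le> \<mu> s) \<and> (\<mu> \<longlongrightarrow> 0) at_top
           \<and> (\<forall>r h w. (r,h,w) \<in> S \<and> 0 \<le> r \<longrightarrow> w \<le> \<mu> (h - \<tau> r))"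
proof -
  have "\<forall>j::nat. \<exists>T. \<forall>r h w. (r,h,w) \<in> S \<and> r \<le> real j \<and> T \<le> h \<longrightarrow> w \<le> 1 / (real j + 1)"
    using F3 by simp
  then obtain T where T: "\<And>j r h w. (r,h,w) \<in> S \<Longrightarrow> r \<le> real j \<Longrightarrow> T j \<le> h \<Longrightarrow> w \<le> 1 / (real j + 1)"
    by metis
  define tj where "tj j = (\<Sum>i\<le>j. 2 * \<bar>T i\<bar> + 1)" for j :: nat
  have tj_mono: "tj i \<le> tj j" if "i \<le> j" for i j
    unfolding tj_def using that by (intro sum_mono2) auto
  have tj_ge_T: "2 * \<bar>T j\<bar> + 1 \<le> tj j" for j
    unfolding tj_def by (rule member_le_sum) auto
  have tj_ge_j: "real j + 1 \<le> tj j" for j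
  proof -
    have "(\<Sum>i\<le>j. (1::real)) \<le> tj j" unfolding tj_def by (intro sum_mono) auto
    then show ?thesis by simp
  qed
  define M where "M s = insert 0 {w | r h w j. (r,h,w) \<in> S \<and> r \<le> real j \<and> s + tj j \<le> h}" for s
  define m where "m s = Sup (M s)" for s
  have bdd: "bdd_above (M s)" for s
  proof -
    obtain B where B: "\<forall>r h w. (r,h,w) \<in> S \<and> r \<le> abs (2 * s) \<longrightarrow> w \<le> B" using F1 by blast
    have "x \<le> max 1 B" if "x \<in> M s" for x
    proof -
      consider "x = 0" | r h j where "(r,h,x) \<in> S" "r \<le> real j" "s + tj j \<le> h"
        using \<open>x \<in> M s\<close> unfolding M_def by blast
      then show ?thesis
      proof cases
        case 1 then show ?thesis by simp
      next
        case 2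
        show ?thesis
        proof (cases "tj j \<ge> -2 * s")
          case True
          then have "T j \<le> h" using 2 tj_ge_T[of j] by linarith
          then have "x \<le> 1 / (real j + 1)" using T 2 by blast
          also have "\<dots> \<le> 1" by simp
          finally show ?thesis by simp
        next
          case False
          then have "r \<le> abs (2 * s)" using 2 tj_ge_j[of j] by linarith
          then have "x \<le> B" using B 2 by blast
          then show ?thesis by simp
        qed
      qed
    qed
    then show ?thesis by (rule bdd_aboveI)
  qed
  have m_ge: "w \<le> m s" if "(r,h,w) \<in> S" "r \<le> real j" "s + tj j \<le> h" for r h w j s
    unfolding m_def by (rule cSup_upper[OF _ bdd]) (use that in \<open>auto simp: M_def\<close>)
  have m_nn: "0 \<le> m s" for s
    unfolding m_def by (rule cSup_upper[OF _ bdd]) (auto simp: M_def)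
  have m_anti: "m s' \<le> m s" if "s \<le> s'" for s s'
    unfolding m_def using that by (intro cSup_subset_mono bdd) (auto simp: M_def, fastforce)
  have m_lim: "\<exists>S0. \<forall>s\<ge>S0. m s \<le> \<epsilon>" if e0: "\<epsilon> > 0" for \<epsilon>
  proof -
    define J where "J = nat \<lceil>1/\<epsilon>\<rceil>"
    have "1/\<epsilon> \<le> real J" unfolding J_def by linarith
    then have J: "1 / (real J + 1) \<le> \<epsilon>" using e0
      by (simp add: field_simps)
    obtain T' where T': "\<forall>r h w. (r,h,w) \<in> S \<and> r \<le> real J \<and> T' \<le> h \<longrightarrow> w \<le> \<epsilon>"
      using F3[OF e0] by blast
    have "m s \<le> \<epsilon>" if s: "s \<ge> max 0 T'" for s
      unfolding m_def
    proof (rule cSup_least)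
      show "M s \<noteq> {}" by (simp add: M_def)
      fix x assume "x \<in> M s"
      then consider "x = 0" | r h j where "(r,h,x) \<in> S" "r \<le> real j" "s + tj j \<le> h"
        unfolding M_def by blast
      then show "x \<le> \<epsilon>"
      proof cases
        case 1 then show ?thesis using e0 by simp
      next
        case 2
        show ?thesis
        proof (cases "J \<le> j")
          case True
          then have "T j \<le> h" using 2 tj_ge_T[of j] s by linarith
          then have "x \<le> 1 / (real j + 1)" using T 2 by blast
          also have "\<dots> \<le> 1 / (real J + 1)" using True by (simp add: frac_le)
          finally show ?thesis using J by simp
        next
          case False
          then have "r \<le> real J" using 2 by simp
          moreover have "T' \<le> h" using 2 s tj_ge_j[of j] by linarith
          ultimately show ?thesis using T' 2 by blast
        qed
      qed
    qed
    then show ?thesis by blast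
  qed
  define d where "d k = m (of_int k - 1)" for k :: int
  have d_anti: "antimono d" unfolding d_def by (intro antimonoI m_anti) simp
  define \<mu> where "\<mu> = pl d"
  have \<mu>_anti: "antimono \<mu>" unfolding \<mu>_def by (rule pl_antimono[OF d_anti])
  have \<mu>_lower: "m s \<le> \<mu> s" for s
  proof -
    have "m s \<le> d (\<lfloor>s\<rfloor>+1)" unfolding d_def by (intro m_anti) simp
    then show ?thesis unfolding \<mu>_def using pl_anti_lower[OF d_anti, of s] by linarith
  qed
  have \<mu>_upper: "\<mu> s \<le> m (s - 2)" for s
  proof -
    have "d \<lfloor>s\<rfloor> \<le> m (s - 2)" unfolding d_def by (intro m_anti) linarith
    then show ?thesis unfolding \<mu>_def using pl_anti_upper[OF d_anti, of s] by linarith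
  qed
  have \<mu>_nn: "0 \<le> \<mu> s" for s using \<mu>_lower[of s] m_nn[of s] by linarith
  have \<mu>_lim: "(\<mu> \<longlongrightarrow> 0) at_top"
  proof (rule tendstoI)
    fix e :: real assume e: "e > 0"
    obtain S0 where S0: "\<forall>s\<ge>S0. m s \<le> e/2" using m_lim[of "e/2"] e by auto
    have "\<forall>s\<ge>S0 + 2. dist (\<mu> s) 0 < e"
    proof (intro allI impI)
      fix s assume "s \<ge> S0 + 2"
      then have "m (s - 2) \<le> e/2" using S0 by simp
      then have "\<mu> s \<le> e/2" using \<mu>_upper[of s] by linarith
      then show "dist (\<mu> s) 0 < e" using \<mu>_nn[of s] e by (simp add: dist_real_def)
    qed
    then show "\<forall>\<^sub>F s in at_top. dist (\<mu> s) 0 < e" by (auto simp: eventually_at_top_linorder)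
  qed
  define c where "c k = tj (nat (k + 1))" for k :: int
  have c_mono: "mono c" unfolding c_def by (intro monoI tj_mono) simp
  define \<tau> where "\<tau> = pl c"
  have \<tau>_mono: "mono \<tau>" unfolding \<tau>_def by (rule pl_mono[OF c_mono])
  have main: "w \<le> \<mu> (h - \<tau> r)" if "(r,h,w) \<in> S" "0 \<le> r" for r h w
  proof -
    define j where "j = nat \<lceil>r\<rceil>"
    have rj: "r \<le> real j" unfolding j_def by linarith
    have "tj j \<le> c \<lfloor>r\<rfloor>" unfolding c_def j_def using that(2) by (intro tj_mono) linarith
    also have "\<dots> \<le> \<tau> r" unfolding \<tau>_def by (rule pl_mono_lower[OF c_mono])
    finally have "(h - \<tau> r) + tj j \<le> h" by simp
    then have "w \<le> m (h - \<tau> r)" using m_ge[OF that(1) rj] by blast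
    then show ?thesis using \<mu>_lower[of "h - \<tau> r"] by linarith
  qed
  show ?thesis
    apply (rule exI[of _ \<mu>], rule exI[of _ \<tau>])
    using \<mu>_anti \<tau>_mono \<mu>_nn \<mu>_lim main unfolding \<mu>_def \<tau>_def by (auto intro: pl_cont)
qed



lemma KL_majorant:
  fixes S :: "(real \<times> real \<times> real) set"
  assumes S0: "\<And>r h w. (r,h,w) \<in> S \<Longrightarrow> r \<ge> 0"
    and F1: "\<And>R. \<exists>B. \<forall>r h w. (r,h,w) \<in> S \<and> r \<le> R \<longrightarrow> w \<le> B"
    and F2: "\<And>\<epsilon>. \<epsilon> > 0 \<Longrightarrow> \<exists>\<rho>>0. \<forall>r h w. (r,h,w) \<in> S \<and> r \<le> \<rho> \<longrightarrow> w \<le> \<epsilon>"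
    and F3: "\<And>\<epsilon> R. \<epsilon> > 0 \<Longrightarrow> \<exists>T. \<forall>r h w. (r,h,w) \<in> S \<and> r \<le> R \<and> T \<le> h \<longrightarrow> w \<le> \<epsilon>"
  shows "\<exists>\<sigma>. classKL \<sigma> \<and> (\<forall>r h w. (r,h,w) \<in> S \<longrightarrow> w \<le> \<sigma> r h)"
proof -
  have "\<exists>\<kappa>. continuous_on {0..} \<kappa> \<and> strict_mono_on {0..} \<kappa> \<and> \<kappa> 0 = 0
    \<and> (\<forall>r h w. (r,h,w) \<in> S \<longrightarrow> w \<le> \<kappa> r)"
    by (rule kappa_exists[of S]) (fact S0, fact F1, fact F2)
  then obtain \<kappa> where \<kappa>: "continuous_on {0..} \<kappa>" "strict_mono_on {0..} \<kappa>" "\<kappa> 0 = 0"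
    "\<forall>r h w. (r,h,w) \<in> S \<longrightarrow> w \<le> \<kappa> r" by blast
  have "\<exists>\<mu> \<tau>. continuous_on UNIV \<mu> \<and> continuous_on UNIV \<tau> \<and> antimono \<mu> \<and> mono \<tau>
    \<and> (\<forall>s. 0 \<le> \<mu> s) \<and> (\<mu> \<longlongrightarrow> 0) at_top \<and> (\<forall>r h w. (r,h,w) \<in> S \<and> 0 \<le> r \<longrightarrow> w \<le> \<mu> (h - \<tau> r))"
    by (rule psi_exists[of S]) (fact F1, fact F3)
  then obtain \<mu> \<tau> where \<mu>: "continuous_on UNIV \<mu>" "continuous_on UNIV \<tau>" "antimono \<mu>" "mono \<tau>"
    "\<forall>s. 0 \<le> \<mu> s" "(\<mu> \<longlongrightarrow> 0) at_top" "\<forall>r h w. (r,h,w) \<in> S \<and> 0 \<le> r \<longrightarrow> w \<le> \<mu> (h - \<tau> r)"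
    by blast
  have \<kappa>_nn: "0 \<le> \<kappa> r" if "r \<ge> 0" for r
  proof (cases "r = 0")
    case True then show ?thesis using \<kappa> by simp
  next
    case False then have "\<kappa> 0 < \<kappa> r" using that \<kappa>(2) by (intro strict_mono_onD[OF \<kappa>(2)]) auto
    then show ?thesis using \<kappa> by simp
  qed
  define \<sigma> where "\<sigma> r h = min (\<kappa> r) (\<mu> (h - \<tau> r)) + r * exp (- h)" for r h
  have cont2: "continuous_on ({0..} \<times> {0..}) (\<lambda>(s,t). \<sigma> s t)"
  proof -
    have c1: "continuous_on ({0..} \<times> {0..}) (\<lambda>p::real\<times>real. \<kappa> (fst p))"
      by (rule continuous_on_compose2[OF \<kappa>(1) continuous_on_fst]) auto
    have c2: "continuous_on ({0..} \<times> {0..}) (\<lambda>p::real\<times>real. \<mu> (snd p - \<tau> (fst p)))"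
      by (rule continuous_on_compose2[OF \<mu>(1)])
        (auto intro!: continuous_intros continuous_on_compose2[OF \<mu>(2)])
    have "continuous_on ({0..} \<times> {0..}) (\<lambda>p::real\<times>real. min (\<kappa> (fst p)) (\<mu> (snd p - \<tau> (fst p))) + fst p * exp (- snd p))"
      by (intro continuous_intros c1 c2)
    then show ?thesis by (simp add: \<sigma>_def case_prod_beta)
  qed
  have classK: "classK (\<lambda>s. \<sigma> s t)" if t: "t \<ge> 0" for t
  proof -
    have "continuous_on {0..} (\<lambda>s. \<sigma> s t)"
    proof -
      have "continuous_on {0..} (\<lambda>s. \<mu> (t - \<tau> s))"
        by (rule continuous_on_compose2[OF \<mu>(1)]) (auto intro!: continuous_intros continuous_on_compose2[OF \<mu>(2)])
      then show ?thesis unfolding \<sigma>_def by (intro continuous_intros \<kappa>(1))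
    qed
    moreover have "strict_mono_on {0..} (\<lambda>s. \<sigma> s t)"
    proof (rule strict_mono_onI)
      fix r s :: real assume rs: "r \<in> {0..}" "s \<in> {0..}" "r < s"
      have "\<kappa> r < \<kappa> s" using rs by (intro strict_mono_onD[OF \<kappa>(2)]) auto
      moreover have "\<tau> r \<le> \<tau> s" using rs by (intro monoD[OF \<mu>(4)]) simp
      then have "\<mu> (t - \<tau> r) \<le> \<mu> (t - \<tau> s)" by (intro antimonoD[OF \<mu>(3)]) simp
      moreover have "r * exp (- t) < s * exp (- t)" using rs by simp
      ultimately show "\<sigma> r t < \<sigma> s t" unfolding \<sigma>_def by linarith
    qed
    moreover have "\<sigma> 0 t = 0" using \<kappa>(3) \<mu>(5) by (simp add: \<sigma>_def)
    moreover have "\<sigma> s t > 0" if "s > 0" for s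
    proof -
      have "0 \<le> min (\<kappa> s) (\<mu> (t - \<tau> s))" using \<kappa>_nn[of s] \<mu>(5) that by simp
      moreover have "s * exp (- t) > 0" using that by simp
      ultimately show ?thesis unfolding \<sigma>_def by linarith
    qed
    ultimately show ?thesis unfolding classK_def by blast
  qed
  have dec: "antimono_on {0..} (\<sigma> s) \<and> ((\<sigma> s) \<longlongrightarrow> 0) at_top" if s: "s \<ge> 0" for s
  proof
    show "antimono_on {0..} (\<sigma> s)"
    proof (rule monotone_onI)
      fix r r' :: real assume rr: "r \<in> {0..}" "r' \<in> {0..}" "r \<le> r'"
      have "\<mu> (r' - \<tau> s) \<le> \<mu> (r - \<tau> s)" using rr by (intro antimonoD[OF \<mu>(3)]) simp
      moreover have "s * exp (- r') \<le> s * exp (- r)" using rr s by (intro mult_left_mono) auto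
      ultimately show "\<sigma> s r' \<le> \<sigma> s r" unfolding \<sigma>_def by linarith
    qed
    have l1: "((\<lambda>h. \<mu> (h - \<tau> s)) \<longlongrightarrow> 0) at_top"
      by (rule filterlim_compose[OF \<mu>(6)]) (rule filterlim_tendsto_add_at_top[OF tendsto_const filterlim_ident, of "- \<tau> s", simplified])
    have l2: "((\<lambda>h. min (\<kappa> s) (\<mu> (h - \<tau> s))) \<longlongrightarrow> min (\<kappa> s) 0) at_top"
      by (intro tendsto_intros l1)
    have l3: "((\<lambda>h. s * exp (- h)) \<longlongrightarrow> s * 0) at_top"
      by (intro tendsto_intros) (rule filterlim_compose[OF exp_at_bot filterlim_uminus_at_bot_at_top])
    have "((\<sigma> s) \<longlongrightarrow> min (\<kappa> s) 0 + s * 0) at_top"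
      unfolding \<sigma>_def by (intro tendsto_add l2 l3)
    then show "((\<sigma> s) \<longlongrightarrow> 0) at_top" using \<kappa>_nn[OF s] by simp
  qed
  have "classKL \<sigma>" unfolding classKL_def using cont2 classK dec by blast
  moreover have "w \<le> \<sigma> r h" if "(r,h,w) \<in> S" for r h w
  proof -
    have "w \<le> min (\<kappa> r) (\<mu> (h - \<tau> r))" using \<kappa>(4) \<mu>(7) that S0[OF that] by simp
    moreover have "0 \<le> r * exp (- h)" using S0[OF that] by simp
    ultimately show ?thesis unfolding \<sigma>_def by linarith
  qed
  ultimately show ?thesis by blast
qed



lemma part1:
  fixes MU :: "(real \<Rightarrow> 'u::real_normed_vector) set"
    and MD :: "(real \<Rightarrow> 'd) set"
    and \<phi> :: "real \<Rightarrow> real \<Rightarrow> 'x::real_normed_vector \<Rightarrow> (real \<Rightarrow> 'u) \<Rightarrow> (real \<Rightarrow> 'd) \<Rightarrow> 'x"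
    and A\<phi> :: "(real \<times> real \<times> 'x \<times> (real \<Rightarrow> 'u) \<times> (real \<Rightarrow> 'd)) set"
    and V :: "real \<Rightarrow> 'x \<Rightarrow> 'u \<Rightarrow> real"
    and \<gamma> \<delta> :: "real \<Rightarrow> real"
  assumes P1: "\<forall>s\<ge>0. \<forall>T\<ge>0. bdd_above
       {V t (\<phi> t t0 x0 u d) (u t) - (SUP \<tau>\<in>{t0..t}. \<gamma> (\<delta> \<tau> * norm (u \<tau>))) | t t0 x0 u d.
          t \<ge> t0 \<and> norm x0 \<le> s \<and> t0 \<in> {0..T} \<and> d \<in> MD \<and> u \<in> MU \<and> (t,t0,x0,u,d) \<in> A\<phi>}"
    and P2: "\<forall>\<epsilon>>0. \<forall>T\<ge>0. \<exists>\<eta>>0. \<forall>t t0 x0 u d.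
          t \<ge> t0 \<and> norm x0 \<le> \<eta> \<and> t0 \<in> {0..T} \<and> d \<in> MD \<and> u \<in> MU \<and> (t,t0,x0,u,d) \<in> A\<phi>
          \<longrightarrow> V t (\<phi> t t0 x0 u d) (u t) - (SUP \<tau>\<in>{t0..t}. \<gamma> (\<delta> \<tau> * norm (u \<tau>))) \<le> \<epsilon>"
    and P3: "\<forall>\<epsilon>>0. \<forall>T\<ge>0. \<forall>R\<ge>0. \<exists>\<tau>\<^sub>0\<ge>0. \<forall>t t0 x0 u d.
          t \<ge> t0 + \<tau>\<^sub>0 \<and> norm x0 \<le> R \<and> t0 \<in> {0..T} \<and> d \<in> MD \<and> u \<in> MU \<and> (t,t0,x0,u,d) \<in> A\<phi>
          \<longrightarrow> V t (\<phi> t t0 x0 u d) (u t) - (SUP \<tau>\<in>{t0..t}. \<gamma> (\<delta> \<tau> * norm (u \<tau>))) \<le> \<epsilon>"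
  shows "\<exists>\<sigma> \<beta>. classKL \<sigma> \<and> classKplus \<beta> \<and>
            (\<forall>u\<in>MU. \<forall>t0\<ge>0. \<forall>x0. \<forall>d\<in>MD. \<forall>t\<ge>t0. (t,t0,x0,u,d) \<in> A\<phi> \<longrightarrow>
               V t (\<phi> t t0 x0 u d) (u t)
                 \<le> \<sigma> (\<beta> t0 * norm x0) (t - t0) + (SUP \<tau>\<in>{t0..t}. \<gamma> (\<delta> \<tau> * norm (u \<tau>))))"
proof -
  define W where "W t t0 x0 u d = V t (\<phi> t t0 x0 u d) (u t) - (SUP \<tau>\<in>{t0..t}. \<gamma> (\<delta> \<tau> * norm (u \<tau>)))"
    for t t0 x0 u d
  define adm where "adm t t0 x0 u d \<longleftrightarrow> t0 \<ge> 0 \<and> t \<ge> t0 \<and> d \<in> MD \<and> u \<in> MU \<and> (t,t0,x0,u,d) \<in> A\<phi>"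
    for t t0 x0 u d
  have "\<forall>\<epsilon>. \<forall>T. \<exists>\<eta>. \<epsilon> > 0 \<and> T \<ge> 0 \<longrightarrow> \<eta> > 0 \<and> (\<forall>t t0 x0 u d.
          t \<ge> t0 \<and> norm x0 \<le> \<eta> \<and> t0 \<in> {0..T} \<and> d \<in> MD \<and> u \<in> MU \<and> (t,t0,x0,u,d) \<in> A\<phi>
          \<longrightarrow> W t t0 x0 u d \<le> \<epsilon>)"
  proof (intro allI)
    fix \<epsilon> T :: real
    have P2': "\<forall>\<epsilon>>0. \<forall>T\<ge>0. \<exists>\<eta>>0. \<forall>t t0 x0 u d.
          t \<ge> t0 \<and> norm x0 \<le> \<eta> \<and> t0 \<in> {0..T} \<and> d \<in> MD \<and> u \<in> MU \<and> (t,t0,x0,u,d) \<in> A\<phi>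
          \<longrightarrow> W t t0 x0 u d \<le> \<epsilon>" unfolding W_def by (rule P2)
    show "\<exists>\<eta>. \<epsilon> > 0 \<and> T \<ge> 0 \<longrightarrow> \<eta> > 0 \<and> (\<forall>t t0 x0 u d.
          t \<ge> t0 \<and> norm x0 \<le> \<eta> \<and> t0 \<in> {0..T} \<and> d \<in> MD \<and> u \<in> MU \<and> (t,t0,x0,u,d) \<in> A\<phi>
          \<longrightarrow> W t t0 x0 u d \<le> \<epsilon>)"
    proof (cases "\<epsilon> > 0 \<and> T \<ge> 0")
      case True
      have "\<exists>\<eta>>0. \<forall>t t0 x0 u d.
          t \<ge> t0 \<and> norm x0 \<le> \<eta> \<and> t0 \<in> {0..T} \<and> d \<in> MD \<and> u \<in> MU \<and> (t,t0,x0,u,d) \<in> A\<phi>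
          \<longrightarrow> W t t0 x0 u d \<le> \<epsilon>" by (rule P2'[rule_format]) (use True in auto)
      then obtain \<eta> where "\<eta> > 0" "\<forall>t t0 x0 u d.
          t \<ge> t0 \<and> norm x0 \<le> \<eta> \<and> t0 \<in> {0..T} \<and> d \<in> MD \<and> u \<in> MU \<and> (t,t0,x0,u,d) \<in> A\<phi>
          \<longrightarrow> W t t0 x0 u d \<le> \<epsilon>" by blast
      then show ?thesis by blast
    next
      case False then show ?thesis by blast
    qed
  qed
  then have "\<exists>\<eta>. \<forall>\<epsilon>. \<forall>T. \<epsilon> > 0 \<and> T \<ge> 0 \<longrightarrow> \<eta> \<epsilon> T > 0 \<and> (\<forall>t t0 x0 u d.
          t \<ge> t0 \<and> norm x0 \<le> \<eta> \<epsilon> T \<and> t0 \<in> {0..T} \<and> d \<in> MD \<and> u \<in> MU \<and> (t,t0,x0,u,d) \<in> A\<phi>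
          \<longrightarrow> W t t0 x0 u d \<le> \<epsilon>)"
    by (simp only: choice_iff)
  then obtain \<eta> where \<eta>all: "\<forall>\<epsilon>. \<forall>T. \<epsilon> > 0 \<and> T \<ge> 0 \<longrightarrow> \<eta> \<epsilon> T > 0 \<and> (\<forall>t t0 x0 u d.
          t \<ge> t0 \<and> norm x0 \<le> \<eta> \<epsilon> T \<and> t0 \<in> {0..T} \<and> d \<in> MD \<and> u \<in> MU \<and> (t,t0,x0,u,d) \<in> A\<phi>
          \<longrightarrow> W t t0 x0 u d \<le> \<epsilon>)" by (elim exE)
  have \<eta>: "\<eta> \<epsilon> T > 0" if "\<epsilon> > 0" "T \<ge> 0" for \<epsilon> T
    using \<eta>all that by simp
  have \<eta>W: "W t t0 x0 u d \<le> \<epsilon>" if "\<epsilon> > 0" "T \<ge> 0" "t \<ge> t0" "norm x0 \<le> \<eta> \<epsilon> T" "t0 \<in> {0..T}"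
        "d \<in> MD" "u \<in> MU" "(t,t0,x0,u,d) \<in> A\<phi>" for \<epsilon> T t t0 x0 u d
  proof -
    have "\<forall>t t0 x0 u d.
          t \<ge> t0 \<and> norm x0 \<le> \<eta> \<epsilon> T \<and> t0 \<in> {0..T} \<and> d \<in> MD \<and> u \<in> MU \<and> (t,t0,x0,u,d) \<in> A\<phi>
          \<longrightarrow> W t t0 x0 u d \<le> \<epsilon>" using \<eta>all that(1,2) by simp
    then show ?thesis using that by simp
  qed
  define \<eta>n where "\<eta>n n = \<eta> (1 / (real n + 1)) (real n + 1)" for n :: nat
  have \<eta>n_pos: "\<eta>n n > 0" for n unfolding \<eta>n_def by (intro \<eta>) auto
  define b where "b n = (real n + 1) / \<eta>n n" for n :: nat
  have b_pos: "b n > 0" for n unfolding b_def using \<eta>n_pos[of n] by simp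
  define c where "c k = 1 + (\<Sum>i\<le>nat k. b i)" for k :: int
  have c_mono: "mono c" unfolding c_def
    by (intro monoI add_left_mono sum_mono2) (auto simp: less_imp_le[OF b_pos] nat_mono)
  have c_ge1: "1 \<le> c k" for k unfolding c_def by (simp add: sum_nonneg less_imp_le[OF b_pos])
  have c_ge_b: "b (nat k) \<le> c k" for k
  proof -
    have "b (nat k) \<le> (\<Sum>i\<le>nat k. b i)" by (rule member_le_sum) (auto simp: less_imp_le[OF b_pos])
    then show ?thesis unfolding c_def by simp
  qed
  define \<beta> where "\<beta> = pl c"
  have \<beta>_ge1: "1 \<le> \<beta> t" for t using pl_mono_lower[OF c_mono, of t] c_ge1[of "\<lfloor>t\<rfloor>"] unfolding \<beta>_def by linarith
  have \<beta>_ge_b: "b (nat \<lfloor>t\<rfloor>) \<le> \<beta> t" for t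
    using pl_mono_lower[OF c_mono, of t] c_ge_b[of "\<lfloor>t\<rfloor>"] unfolding \<beta>_def by linarith
  have \<beta>_K: "classKplus \<beta>" unfolding classKplus_def
    using \<beta>_ge1 by (auto simp: \<beta>_def pl_cont intro: less_le_trans[OF zero_less_one])
  have x_le: "norm x0 \<le> \<beta> t0 * norm x0" for x0 :: 'x and t0
    using \<beta>_ge1[of t0] by (simp add: mult_right_mono[of 1 "\<beta> t0" "norm x0", simplified])
  have small: "W t t0 x0 u d \<le> 1 / (real (nat \<lfloor>t0\<rfloor>) + 1)"
    if a: "adm t t0 x0 u d" "\<beta> t0 * norm x0 \<le> R" "R \<le> real (nat \<lfloor>t0\<rfloor>) + 1" for t t0 x0 u d R
  proof -
    define n where "n = nat \<lfloor>t0\<rfloor>"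
    have t0: "0 \<le> t0" "t0 \<le> real n + 1" using a(1) unfolding adm_def n_def by linarith+
    have "b n * norm x0 \<le> \<beta> t0 * norm x0" using \<beta>_ge_b[of t0] unfolding n_def by (simp add: mult_right_mono)
    then have "b n * norm x0 \<le> real n + 1" using a(2,3) unfolding n_def by linarith
    then have "norm x0 \<le> (real n + 1) / b n" using b_pos[of n] by (simp add: field_simps)
    also have "\<dots> = \<eta>n n" unfolding b_def using \<eta>n_pos[of n] by simp
    finally have "norm x0 \<le> \<eta> (1 / (real n + 1)) (real n + 1)" unfolding \<eta>n_def .
    then show ?thesis unfolding n_def[symmetric] using a(1) t0 unfolding adm_def
      by (intro \<eta>W) auto
  qed
  define Sset where "Sset = {(\<beta> t0 * norm x0, t - t0, W t t0 x0 u d) | t t0 x0 u d. adm t t0 x0 u d}"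
  have Sset_E: "\<exists>t t0 x0 u d. r = \<beta> t0 * norm x0 \<and> h = t - t0 \<and> w = W t t0 x0 u d \<and> adm t t0 x0 u d"
    if "(r,h,w) \<in> Sset" for r h w using that unfolding Sset_def by blast
  have S0: "r \<ge> 0" if rin: "(r,h,w) \<in> Sset" for r h w
  proof -
    obtain t t0 x0 u d where "r = \<beta> t0 * norm x0" "adm t t0 x0 u d" using Sset_E[OF rin] by blast
    moreover have "0 \<le> \<beta> t0" using \<beta>_ge1[of t0] by linarith
    ultimately show ?thesis by simp
  qed
  have F1: "\<exists>B. \<forall>r h w. (r,h,w) \<in> Sset \<and> r \<le> R \<longrightarrow> w \<le> B" for R
  proof -
    have "bdd_above
       {V t (\<phi> t t0 x0 u d) (u t) - (SUP \<tau>\<in>{t0..t}. \<gamma> (\<delta> \<tau> * norm (u \<tau>))) | t t0 x0 u d.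
          t \<ge> t0 \<and> norm x0 \<le> \<bar>R\<bar> \<and> t0 \<in> {0..\<bar>R\<bar>} \<and> d \<in> MD \<and> u \<in> MU \<and> (t,t0,x0,u,d) \<in> A\<phi>}"
      using P1 by simp
    then obtain M where M: "\<And>t t0 x0 u d. t \<ge> t0 \<and> norm x0 \<le> \<bar>R\<bar> \<and> t0 \<in> {0..\<bar>R\<bar>} \<and> d \<in> MD \<and> u \<in> MU \<and> (t,t0,x0,u,d) \<in> A\<phi>
       \<Longrightarrow> W t t0 x0 u d \<le> M"
      unfolding bdd_above_def W_def by blast
    have "w \<le> max 1 M" if rin: "(r,h,w) \<in> Sset" "r \<le> R" for r h w
    proof -
      obtain t t0 x0 u d where e: "r = \<beta> t0 * norm x0" "w = W t t0 x0 u d" "adm t t0 x0 u d"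
        using Sset_E[OF rin(1)] by blast
      show ?thesis
      proof (cases "R \<le> real (nat \<lfloor>t0\<rfloor>) + 1")
        case True
        then have "w \<le> 1 / (real (nat \<lfloor>t0\<rfloor>) + 1)" using small[OF e(3)] e that(2) by simp
        also have "\<dots> \<le> 1" by simp
        finally show ?thesis by simp
      next
        case False
        then have "t0 \<le> \<bar>R\<bar>" using e(3) unfolding adm_def by linarith
        moreover have "norm x0 \<le> \<bar>R\<bar>" using x_le[of x0 t0] e that(2) by linarith
        ultimately have "w \<le> M" using M e(3) unfolding adm_def e(2) by auto
        then show ?thesis by simp
      qed
    qed
    then show ?thesis by blast
  qed
  have F2: "\<exists>\<rho>>0. \<forall>r h w. (r,h,w) \<in> Sset \<and> r \<le> \<rho> \<longrightarrow> w \<le> \<epsilon>" if e0: "\<epsilon> > 0" for \<epsilon>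
  proof -
    define N where "N = nat \<lceil>1/\<epsilon>\<rceil>"
    have "1/\<epsilon> \<le> real N" unfolding N_def by linarith
    then have N: "1 / (real N + 1) \<le> \<epsilon>" using e0 by (simp add: field_simps)
    define \<rho> where "\<rho> = min 1 (\<eta> \<epsilon> (real N + 1))"
    have \<rho>: "\<rho> > 0" unfolding \<rho>_def using \<eta>[OF e0, of "real N + 1"] by simp
    have "w \<le> \<epsilon>" if rin: "(r,h,w) \<in> Sset" "r \<le> \<rho>" for r h w
    proof -
      obtain t t0 x0 u d where e: "r = \<beta> t0 * norm x0" "w = W t t0 x0 u d" "adm t t0 x0 u d"
        using Sset_E[OF rin(1)] by blast
      show ?thesis
      proof (cases "N \<le> nat \<lfloor>t0\<rfloor>")
        case True
        have "\<rho> \<le> real (nat \<lfloor>t0\<rfloor>) + 1" unfolding \<rho>_def by simp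
        then have "w \<le> 1 / (real (nat \<lfloor>t0\<rfloor>) + 1)" using small[OF e(3)] e that(2) by simp
        also have "\<dots> \<le> 1 / (real N + 1)" using True by (simp add: frac_le)
        finally show ?thesis using N by simp
      next
        case False
        then have "t0 \<le> real N + 1" using e(3) unfolding adm_def by linarith
        moreover have "norm x0 \<le> \<eta> \<epsilon> (real N + 1)" using x_le[of x0 t0] e that(2) unfolding \<rho>_def by linarith
        ultimately show ?thesis using e(3) unfolding adm_def e(2) by (intro \<eta>W[OF e0]) auto
      qed
    qed
    then show ?thesis using \<rho> by blast
  qed
  have F3: "\<exists>T. \<forall>r h w. (r,h,w) \<in> Sset \<and> r \<le> R \<and> T \<le> h \<longrightarrow> w \<le> \<epsilon>" if e0: "\<epsilon> > 0" for \<epsilon> R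
  proof -
    define N where "N = nat \<lceil>max (1/\<epsilon>) R\<rceil>"
    have "1/\<epsilon> \<le> real N" "R \<le> real N" unfolding N_def by linarith+
    then have N: "1 / (real N + 1) \<le> \<epsilon>" "R \<le> real N" using e0 by (simp_all add: field_simps)
    obtain \<tau>0 where \<tau>0: "\<forall>t t0 x0 u d.
          t \<ge> t0 + \<tau>0 \<and> norm x0 \<le> max R 0 \<and> t0 \<in> {0..real N} \<and> d \<in> MD \<and> u \<in> MU \<and> (t,t0,x0,u,d) \<in> A\<phi>
          \<longrightarrow> W t t0 x0 u d \<le> \<epsilon>"
      using P3 e0 unfolding W_def by (meson max.cobounded2 of_nat_0_le_iff)
    have "w \<le> \<epsilon>" if rin: "(r,h,w) \<in> Sset" "r \<le> R" "\<tau>0 \<le> h" for r h w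
    proof -
      obtain t t0 x0 u d where e: "r = \<beta> t0 * norm x0" "h = t - t0" "w = W t t0 x0 u d" "adm t t0 x0 u d"
        using Sset_E[OF rin(1)] by blast
      show ?thesis
      proof (cases "N \<le> nat \<lfloor>t0\<rfloor>")
        case True
        have "R \<le> real (nat \<lfloor>t0\<rfloor>) + 1" using True N by linarith
        then have "w \<le> 1 / (real (nat \<lfloor>t0\<rfloor>) + 1)" using small[OF e(4)] e that(2) by simp
        also have "\<dots> \<le> 1 / (real N + 1)" using True by (simp add: frac_le)
        finally show ?thesis using N by simp
      next
        case False
        then have "t0 \<le> real N" using e(4) unfolding adm_def by linarith
        moreover have "norm x0 \<le> max R 0" using x_le[of x0 t0] e that(2) by linarith
        moreover have "t \<ge> t0 + \<tau>0" using e that(3) by simp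
        ultimately show ?thesis using \<tau>0 e(4) unfolding adm_def e(3) by auto
      qed
    qed
    then show ?thesis by blast
  qed
  have "\<exists>\<sigma>. classKL \<sigma> \<and> (\<forall>r h w. (r,h,w) \<in> Sset \<longrightarrow> w \<le> \<sigma> r h)"
    by (rule KL_majorant) (fact S0, fact F1, fact F2, fact F3)
  then obtain \<sigma> where \<sigma>: "classKL \<sigma>" "\<forall>r h w. (r,h,w) \<in> Sset \<longrightarrow> w \<le> \<sigma> r h" by blast
  have "V t (\<phi> t t0 x0 u d) (u t)
                 \<le> \<sigma> (\<beta> t0 * norm x0) (t - t0) + (SUP \<tau>\<in>{t0..t}. \<gamma> (\<delta> \<tau> * norm (u \<tau>)))"
    if "u \<in> MU" "t0 \<ge> 0" "d \<in> MD" "t \<ge> t0" "(t,t0,x0,u,d) \<in> A\<phi>" for u t0 x0 d t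
  proof -
    have "(\<beta> t0 * norm x0, t - t0, W t t0 x0 u d) \<in> Sset"
      unfolding Sset_def adm_def using that by blast
    then have "W t t0 x0 u d \<le> \<sigma> (\<beta> t0 * norm x0) (t - t0)" using \<sigma>(2) by blast
    then show ?thesis unfolding W_def by simp
  qed
  then show ?thesis using \<sigma>(1) \<beta>_K by blast
qed



lemma Kinf_inverse:
  assumes "classKinf \<rho>"
  shows "\<exists>\<rho>i. continuous_on {0..} \<rho>i \<and> \<rho>i 0 = 0 \<and> (\<forall>p\<ge>0. \<rho>i p \<ge> 0 \<and> \<rho> (\<rho>i p) = p)
           \<and> (\<forall>g p. g \<ge> 0 \<and> p \<ge> 0 \<and> \<rho> g < p \<longrightarrow> g < \<rho>i p) \<and> mono_on {0..} \<rho>i"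
proof -
  have cont: "continuous_on {0..} \<rho>" and sm: "strict_mono_on {0..} \<rho>" and z: "\<rho> 0 = 0"
    and unb: "\<not> bdd_above (\<rho> ` {0..})"
    using assms unfolding classKinf_def classK_def by auto
  have le_iff: "\<rho> x \<le> \<rho> y \<longleftrightarrow> x \<le> y" if "x \<ge> 0" "y \<ge> 0" for x y
  proof
    assume a: "\<rho> x \<le> \<rho> y"
    show "x \<le> y"
    proof (rule ccontr)
      assume "\<not> x \<le> y"
      then have "\<rho> y < \<rho> x" using that by (intro strict_mono_onD[OF sm]) auto
      then show False using a by simp
    qed
  next
    assume a: "x \<le> y"
    show "\<rho> x \<le> \<rho> y"
    proof (cases "x = y")
      case False
      then have "\<rho> x < \<rho> y" using that a by (intro strict_mono_onD[OF sm]) auto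
      then show ?thesis by simp
    qed simp
  qed
  have eq_iff: "\<rho> x = \<rho> y \<longleftrightarrow> x = y" if "x \<ge> 0" "y \<ge> 0" for x y
    using le_iff[OF that] le_iff[OF that(2,1)] by (auto simp: order_eq_iff)
  have ex: "\<exists>x\<ge>0. \<rho> x = p" if p: "p \<ge> 0" for p
  proof -
    have "\<not> (\<forall>y\<in>\<rho> ` {0..}. y \<le> p)" using unb by (auto simp: bdd_above_def)
    then obtain y where "y \<in> \<rho> ` {0..}" "\<not> y \<le> p" by blast
    then obtain n where n: "n \<ge> 0" "\<rho> n > p" by auto
    have "\<exists>x. 0 \<le> x \<and> x \<le> n \<and> \<rho> x = p"
      by (rule IVT') (use z p n in \<open>auto intro: continuous_on_subset[OF cont]\<close>)
    then show ?thesis by blast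
  qed
  define \<rho>i where "\<rho>i p = (SOME x. x \<ge> 0 \<and> \<rho> x = p)" for p
  have \<rho>i: "\<rho>i p \<ge> 0 \<and> \<rho> (\<rho>i p) = p" if "p \<ge> 0" for p
    unfolding \<rho>i_def using ex[OF that] by (rule someI_ex)
  have \<rho>i_\<rho>: "\<rho>i (\<rho> x) = x" if "x \<ge> 0" for x
  proof -
    have "\<rho> x \<ge> 0" using le_iff[of 0 x] that z by simp
    then show ?thesis using \<rho>i[of "\<rho> x"] eq_iff[of "\<rho>i (\<rho> x)" x] that by auto
  qed
  have z': "\<rho>i 0 = 0" using \<rho>i_\<rho>[of 0] z by simp
  have less: "g < \<rho>i p" if "g \<ge> 0" "p \<ge> 0" "\<rho> g < p" for g p
  proof (rule ccontr)
    assume "\<not> g < \<rho>i p"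
    then have "\<rho>i p \<le> g" by simp
    then have "\<rho> (\<rho>i p) \<le> \<rho> g" using le_iff[of "\<rho>i p" g] \<rho>i[OF that(2)] that(1) by simp
    then show False using \<rho>i[OF that(2)] that(3) by simp
  qed
  have mono: "mono_on {0..} \<rho>i"
  proof (rule mono_onI)
    fix p q :: real assume pq: "p \<in> {0..}" "q \<in> {0..}" "p \<le> q"
    then show "\<rho>i p \<le> \<rho>i q" using le_iff[of "\<rho>i p" "\<rho>i q"] \<rho>i[of p] \<rho>i[of q] by auto
  qed
  have "continuous (at p within {0..}) \<rho>i" if p: "p \<in> {0..}" for p
  proof (cases "p = 0")
    case False
    then have p0: "p > 0" using p by simp
    define x where "x = \<rho>i p"
    have x: "x \<ge> 0" "\<rho> x = p" using \<rho>i[of p] p0 unfolding x_def by auto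
    have x0: "x > 0" using x z p0 by (cases "x = 0") auto
    have "isCont \<rho>i (\<rho> x)"
    proof (rule isCont_inverse_function[where d="x/2" and x=x and f=\<rho> and g=\<rho>i])
      show "0 < x/2" using x0 by simp
      fix z assume "\<bar>z - x\<bar> \<le> x/2"
      then have "x - z \<le> x/2" using abs_ge_minus_self[of "z - x"] by linarith
      then have zpos: "z > 0" using x0 by linarith
      show "\<rho>i (\<rho> z) = z" using zpos by (simp add: \<rho>i_\<rho>)
      show "isCont \<rho> z" using zpos by (intro continuous_on_interior[OF cont]) auto
    qed
    then show ?thesis using x by (simp add: continuous_at_imp_continuous_at_within)
  next
    case True
    show ?thesis unfolding continuous_within_eps_delta True
    proof (intro allI impI)
      fix e :: real assume e: "e > 0"
      have d: "\<rho> (e/2) > 0" using le_iff[of 0 "e/2"] eq_iff[of 0 "e/2"] z e by force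
      have "dist (\<rho>i q) (\<rho>i 0) < e" if q: "q \<in> {0..}" "dist q 0 < \<rho> (e/2)" for q
      proof -
        have q0: "q \<ge> 0" "q < \<rho> (e/2)" using q by (auto simp: dist_real_def)
        have "\<rho>i q < e/2"
        proof (rule ccontr)
          assume "\<not> \<rho>i q < e/2"
          then have "e/2 \<le> \<rho>i q" by simp
          then have "\<rho> (e/2) \<le> \<rho> (\<rho>i q)" using le_iff[of "e/2" "\<rho>i q"] \<rho>i[of q] q0 e by auto
          then show False using \<rho>i[of q] q0 by simp
        qed
        moreover have "\<rho>i q \<ge> 0" using \<rho>i q by auto
        ultimately show ?thesis using z' e by (simp add: dist_real_def)
      qed
      then show "\<exists>d>0. \<forall>x'\<in>{0..}. dist x' 0 < d \<longrightarrow> dist (\<rho>i x') (\<rho>i 0) < e"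
        using d by blast
    qed
  qed
  then have "continuous_on {0..} \<rho>i" by (simp add: continuous_on_eq_continuous_within)
  then show ?thesis using z' \<rho>i less mono by blast
qed

lemma part2:
  fixes U :: "'u::real_normed_vector set" and MU :: "(real \<Rightarrow> 'u) set"
    and D :: "'d set" and MD :: "(real \<Rightarrow> 'd) set"
    and \<phi> :: "real \<Rightarrow> real \<Rightarrow> 'x::real_normed_vector \<Rightarrow> (real \<Rightarrow> 'u) \<Rightarrow> (real \<Rightarrow> 'd) \<Rightarrow> 'x"
    and A\<phi> :: "(real \<times> real \<times> 'x \<times> (real \<Rightarrow> 'u) \<times> (real \<Rightarrow> 'd)) set"
    and \<pi> :: "real \<Rightarrow> 'x \<Rightarrow> (real \<Rightarrow> 'u) \<Rightarrow> (real \<Rightarrow> 'd) \<Rightarrow> real set"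
    and H :: "real \<Rightarrow> 'x \<Rightarrow> 'u \<Rightarrow> 'y::real_normed_vector"
    and V :: "real \<Rightarrow> 'x \<Rightarrow> 'u \<Rightarrow> real"
    and \<gamma> \<delta> :: "real \<Rightarrow> real"
  assumes sys: "control_system U MU D MD \<phi> A\<phi> \<pi> H"
    and bic: "BIC MU MD \<phi> A\<phi>"
    and req: "robust_equilibrium MU MD \<phi> A\<phi> H"
    and rfc: "RFC U MU MD \<phi> A\<phi>"
    and V_nonneg: "\<forall>t\<ge>0. \<forall>x. \<forall>v\<in>U. V t x v \<ge> 0"
    and gamma: "classN \<gamma>" and delta: "classKplus \<delta>"
    and sigma: "classKL \<sigma>" and beta: "classKplus \<beta>"
    and est: "\<forall>u\<in>MU. \<forall>t0\<ge>0. \<forall>x0. \<forall>d\<in>MD. \<forall>t\<ge>t0. (t,t0,x0,u,d) \<in> A\<phi> \<longrightarrow>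
               V t (\<phi> t t0 x0 u d) (u t)
                 \<le> \<sigma> (\<beta> t0 * norm x0) (t - t0) + (SUP \<tau>\<in>{t0..t}. \<gamma> (\<delta> \<tau> * norm (u \<tau>)))"
    and a: "classN a" and Hb: "\<forall>t\<ge>0. \<forall>x. \<forall>v\<in>U. norm (H t x v) \<le> a (V t x v)"
    and rho: "classKinf \<rho>"
  shows "WIOS U MU MD \<phi> A\<phi> H (\<lambda>s. a (\<gamma> s + \<rho> (\<gamma> s))) \<delta>"
proof -
  obtain \<rho>i where \<rho>i: "continuous_on {0..} \<rho>i" "\<rho>i 0 = 0" "\<forall>p\<ge>0. \<rho>i p \<ge> 0 \<and> \<rho> (\<rho>i p) = p"
    "\<forall>g p. g \<ge> 0 \<and> p \<ge> 0 \<and> \<rho> g < p \<longrightarrow> g < \<rho>i p" "mono_on {0..} \<rho>i"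
    using Kinf_inverse[OF rho] by blast
  have a_cont: "continuous_on {0..} a" and a_mono: "mono_on {0..} a" and a0: "a 0 = 0"
    and a_nn: "\<And>s. s \<ge> 0 \<Longrightarrow> a s \<ge> 0" using a unfolding classN_def by auto
  have g_cont: "continuous_on {0..} \<gamma>" and g_mono: "mono_on {0..} \<gamma>" and g0: "\<gamma> 0 = 0"
    and g_nn: "\<And>s. s \<ge> 0 \<Longrightarrow> \<gamma> s \<ge> 0" using gamma unfolding classN_def by auto
  have r_cont: "continuous_on {0..} \<rho>" and r_sm: "strict_mono_on {0..} \<rho>" and r0: "\<rho> 0 = 0"
    using rho unfolding classKinf_def classK_def by auto
  have r_mono: "\<rho> x \<le> \<rho> y" if "0 \<le> x" "x \<le> y" for x y
  proof (cases "x = y")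
    case False then show ?thesis using that by (intro less_imp_le strict_mono_onD[OF r_sm]) auto
  qed simp
  have r_nn: "\<rho> x \<ge> 0" if "x \<ge> 0" for x using r_mono[of 0 x] that r0 by simp
  have ri_nn: "\<rho>i x \<ge> 0" if "x \<ge> 0" for x using \<rho>i(3) that by simp
  define F where "F x = a (x + \<rho>i x)" for x
  define F2 where "F2 x = a (x + \<rho> x)" for x
  have F_cont: "continuous_on {0..} F"
    unfolding F_def by (rule continuous_on_compose2[OF a_cont]) (auto intro!: continuous_intros \<rho>i(1) add_nonneg_nonneg ri_nn)
  have F2_cont: "continuous_on {0..} F2"
    unfolding F2_def by (rule continuous_on_compose2[OF a_cont]) (auto intro!: continuous_intros r_cont add_nonneg_nonneg r_nn)
  have F_mono: "F x \<le> F y" if "0 \<le> x" "x \<le> y" for x y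
  proof -
    have "\<rho>i x \<le> \<rho>i y" using that by (intro mono_onD[OF \<rho>i(5)]) auto
    then show ?thesis unfolding F_def using that ri_nn[of x]
      by (intro mono_onD[OF a_mono]) auto
  qed
  have F2_mono: "F2 x \<le> F2 y" if "0 \<le> x" "x \<le> y" for x y
  proof -
    have "\<rho> x \<le> \<rho> y" using that by (intro r_mono)
    then show ?thesis unfolding F2_def using that r_nn[of x]
      by (intro mono_onD[OF a_mono]) auto
  qed
  have F_nn: "F x \<ge> 0" if "x \<ge> 0" for x unfolding F_def using that ri_nn[of x] by (intro a_nn) simp
  have F2_nn: "F2 x \<ge> 0" if "x \<ge> 0" for x unfolding F2_def using that r_nn[of x] by (intro a_nn) simp
  have F0: "F 0 = 0" unfolding F_def using \<rho>i(2) a0 by simp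
  have F20: "F2 0 = 0" unfolding F2_def using r0 a0 by simp
  have gt: "(\<lambda>s. a (\<gamma> s + \<rho> (\<gamma> s))) = (\<lambda>s. F2 (\<gamma> s))" unfolding F2_def by simp
  have classN_gt: "classN (\<lambda>s. a (\<gamma> s + \<rho> (\<gamma> s)))"
    unfolding gt classN_def
  proof (intro conjI allI impI)
    show "continuous_on {0..} (\<lambda>s. F2 (\<gamma> s))"
      by (rule continuous_on_compose2[OF F2_cont g_cont]) (auto intro: g_nn)
    show "mono_on {0..} (\<lambda>s. F2 (\<gamma> s))"
      by (rule mono_onI) (auto intro!: F2_mono g_nn mono_onD[OF g_mono])
    show "F2 (\<gamma> 0) = 0" using g0 F20 by simp
    fix s :: real assume "0 \<le> s" then show "0 \<le> F2 (\<gamma> s)" by (intro F2_nn g_nn)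
  qed
  have s_cont2: "continuous_on ({0..} \<times> {0..}) (\<lambda>(s,t). \<sigma> s t)"
    and sK: "\<And>t. t \<ge> 0 \<Longrightarrow> classK (\<lambda>s. \<sigma> s t)"
    and sdec: "\<And>s. s \<ge> 0 \<Longrightarrow> antimono_on {0..} (\<sigma> s) \<and> ((\<sigma> s) \<longlongrightarrow> 0) at_top"
    using sigma unfolding classKL_def by auto
  have s_nn: "\<sigma> s t \<ge> 0" if "s \<ge> 0" "t \<ge> 0" for s t
    using sK[OF that(2)] that(1) unfolding classK_def by (cases "s = 0") (auto intro: less_imp_le)
  define \<sigma>' where "\<sigma>' s t = F (\<sigma> s t) + \<sigma> s t" for s t
  have KL': "classKL \<sigma>'"
    unfolding classKL_def
  proof (intro conjI allI impI)
    have "continuous_on ({0..} \<times> {0..}) (\<lambda>p. F ((\<lambda>(s,t). \<sigma> s t) p) + (\<lambda>(s,t). \<sigma> s t) p)"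
    proof (rule continuous_on_add[OF _ s_cont2])
      show "continuous_on ({0..} \<times> {0..}) (\<lambda>p. F ((\<lambda>(s,t). \<sigma> s t) p))"
        by (rule continuous_on_compose2[OF F_cont s_cont2]) (auto intro: s_nn)
    qed
    then show "continuous_on ({0..} \<times> {0..}) (\<lambda>(s,t). \<sigma>' s t)"
      by (simp add: \<sigma>'_def case_prod_beta)
  next
    fix t :: real assume t: "t \<ge> 0"
    have sc: "continuous_on {0..} (\<lambda>s. \<sigma> s t)" and ssm: "strict_mono_on {0..} (\<lambda>s. \<sigma> s t)"
      and sz: "\<sigma> 0 t = 0" and sp: "\<And>s. s > 0 \<Longrightarrow> \<sigma> s t > 0"
      using sK[OF t] unfolding classK_def by auto
    show "classK (\<lambda>s. \<sigma>' s t)" unfolding classK_def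
    proof (intro conjI allI impI)
      show "continuous_on {0..} (\<lambda>s. \<sigma>' s t)" unfolding \<sigma>'_def
        by (intro continuous_intros sc continuous_on_compose2[OF F_cont sc]) (auto intro: s_nn t)
      show "strict_mono_on {0..} (\<lambda>s. \<sigma>' s t)"
      proof (rule strict_mono_onI)
        fix r s :: real assume rs: "r \<in> {0..}" "s \<in> {0..}" "r < s"
        have "\<sigma> r t < \<sigma> s t" using rs by (intro strict_mono_onD[OF ssm])
        moreover have "F (\<sigma> r t) \<le> F (\<sigma> s t)" using calculation rs t by (intro F_mono s_nn) auto
        ultimately show "\<sigma>' r t < \<sigma>' s t" unfolding \<sigma>'_def by simp
      qed
      show "\<sigma>' 0 t = 0" unfolding \<sigma>'_def using sz F0 by simp
      fix s :: real assume "0 < s"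
      then show "0 < \<sigma>' s t" unfolding \<sigma>'_def using sp[of s] F_nn[of "\<sigma> s t"] by simp
    qed
  next
    fix s :: real assume s: "s \<ge> 0"
    have sa: "antimono_on {0..} (\<sigma> s)" and sl: "((\<sigma> s) \<longlongrightarrow> 0) at_top" using sdec[OF s] by auto
    show "antimono_on {0..} (\<sigma>' s)"
    proof (rule monotone_onI)
      fix r r' :: real assume rr: "r \<in> {0..}" "r' \<in> {0..}" "r \<le> r'"
      have "\<sigma> s r' \<le> \<sigma> s r" using rr by (rule monotone_onD[OF sa])
      moreover have "F (\<sigma> s r') \<le> F (\<sigma> s r)" using calculation rr s by (intro F_mono s_nn) auto
      ultimately show "\<sigma>' s r' \<le> \<sigma>' s r" unfolding \<sigma>'_def by simp
    qed
    have ev: "\<forall>\<^sub>F t in at_top. \<sigma> s t \<in> {0..}"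
      using s by (auto simp: eventually_at_top_linorder intro!: exI[of _ 0] s_nn)
    have "((\<lambda>t. F (\<sigma> s t)) \<longlongrightarrow> F 0) at_top"
      by (rule continuous_on_tendsto_compose[OF F_cont sl _ ev]) simp
    then have "((\<lambda>t. F (\<sigma> s t) + \<sigma> s t) \<longlongrightarrow> 0 + 0) at_top" using F0 by (intro tendsto_add sl) simp
    then show "((\<sigma>' s) \<longlongrightarrow> 0) at_top" by (simp add: \<sigma>'_def[abs_def])
  qed
  have sysU: "MU \<subseteq> locbdd_fun U" using sys unfolding control_system_def by auto
  have d_cont: "continuous_on {0..} \<delta>" and d_pos: "\<And>t. t \<ge> 0 \<Longrightarrow> \<delta> t > 0"
    using delta unfolding classKplus_def by auto
  have b_pos: "\<And>t. t \<ge> 0 \<Longrightarrow> \<beta> t > 0" using beta unfolding classKplus_def by auto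
  have bound: "norm (H t (\<phi> t t0 x0 u d) (u t))
      \<le> \<sigma>' (\<beta> t0 * norm x0) (t - t0) + (SUP \<tau>\<in>{t0..t}. (\<lambda>s. a (\<gamma> s + \<rho> (\<gamma> s))) (\<delta> \<tau> * norm (u \<tau>)))"
    if u: "u \<in> MU" and t0: "t0 \<ge> 0" and d: "d \<in> MD" and t: "t \<ge> t0" and A: "(t,t0,x0,u,d) \<in> A\<phi>"
    for u t0 x0 d t
  proof -
    have uU: "\<And>s. s \<ge> 0 \<Longrightarrow> u s \<in> U" and ub: "bounded (u ` {0..t})"
      using sysU u t t0 unfolding locbdd_fun_def by auto
    obtain M where M: "M > 0" "\<And>\<tau>. \<tau> \<in> {0..t} \<Longrightarrow> norm (u \<tau>) \<le> M"
      using ub unfolding bounded_pos by auto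
    obtain \<tau>m where \<tau>m: "\<tau>m \<in> {t0..t}" "\<And>\<tau>. \<tau> \<in> {t0..t} \<Longrightarrow> \<delta> \<tau> \<le> \<delta> \<tau>m"
      using continuous_attains_sup[of "{t0..t}" \<delta>] continuous_on_subset[OF d_cont, of "{t0..t}"] t0 t
      by auto
    define Y where "Y = (\<lambda>\<tau>. \<gamma> (\<delta> \<tau> * norm (u \<tau>))) ` {t0..t}"
    have arg_nn: "0 \<le> \<delta> \<tau> * norm (u \<tau>)" if "\<tau> \<in> {t0..t}" for \<tau>
      using d_pos[of \<tau>] that t0 by simp
    have Y_nn: "y \<ge> 0" if "y \<in> Y" for y using that arg_nn g_nn unfolding Y_def by auto
    have Y_ne: "Y \<noteq> {}" using t unfolding Y_def by auto
    have Y_bdd: "bdd_above Y"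
    proof (rule bdd_aboveI)
      fix y assume "y \<in> Y"
      then obtain \<tau> where \<tau>: "\<tau> \<in> {t0..t}" "y = \<gamma> (\<delta> \<tau> * norm (u \<tau>))" unfolding Y_def by auto
      have "\<delta> \<tau> * norm (u \<tau>) \<le> \<delta> \<tau>m * M"
        using \<tau> \<tau>m M t0 d_pos[of \<tau>] d_pos[of \<tau>m] by (intro mult_mono) auto
      then show "y \<le> \<gamma> (\<delta> \<tau>m * M)" unfolding \<tau>(2) using arg_nn[OF \<tau>(1)]
        by (intro mono_onD[OF g_mono]) auto
    qed
    define g where "g = Sup Y"
    have g_nn': "g \<ge> 0"
    proof -
      have "\<gamma> (\<delta> t0 * norm (u t0)) \<in> Y" using t unfolding Y_def by auto
      then have "\<gamma> (\<delta> t0 * norm (u t0)) \<le> g" unfolding g_def using Y_bdd by (rule cSup_upper)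
      moreover have "\<gamma> (\<delta> t0 * norm (u t0)) \<ge> 0" using arg_nn[of t0] t by (intro g_nn) auto
      ultimately show ?thesis by linarith
    qed
    define F2' where "F2' x = F2 (max 0 x)" for x
    have F2'_mono: "mono F2'" unfolding F2'_def by (rule monoI) (auto intro!: F2_mono)
    have "continuous_on UNIV F2'" unfolding F2'_def
      by (rule continuous_on_compose2[OF F2_cont]) (auto intro!: continuous_intros)
    then have "continuous (at_left (Sup Y)) F2'"
      by (simp add: continuous_on_eq_continuous_at continuous_at_imp_continuous_at_within)
    then have "F2' (Sup Y) = (SUP y\<in>Y. F2' y)"
      by (rule continuous_at_Sup_mono[OF F2'_mono _ Y_ne Y_bdd])
    also have "\<dots> = (SUP y\<in>Y. F2 y)" using Y_nn unfolding F2'_def by (intro SUP_cong) auto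
    also have "\<dots> = (SUP \<tau>\<in>{t0..t}. (\<lambda>s. a (\<gamma> s + \<rho> (\<gamma> s))) (\<delta> \<tau> * norm (u \<tau>)))"
      unfolding Y_def image_image F2_def by simp
    finally have F2g: "F2 g = (SUP \<tau>\<in>{t0..t}. (\<lambda>s. a (\<gamma> s + \<rho> (\<gamma> s))) (\<delta> \<tau> * norm (u \<tau>)))"
      unfolding F2'_def g_def using g_nn' g_def by simp
    define p where "p = \<sigma> (\<beta> t0 * norm x0) (t - t0)"
    have p_nn: "p \<ge> 0" unfolding p_def using b_pos[OF t0] t by (intro s_nn) auto
    define V0 where "V0 = V t (\<phi> t t0 x0 u d) (u t)"
    have V0_nn: "V0 \<ge> 0" unfolding V0_def using V_nonneg uU[of t] t t0 by auto
    have V0_le: "V0 \<le> p + g" unfolding V0_def p_def g_def Y_def using est u t0 d t A by (simp add: image_image)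
    have "norm (H t (\<phi> t t0 x0 u d) (u t)) \<le> a V0" unfolding V0_def using Hb uU[of t] t t0 by auto
    also have "\<dots> \<le> a (p + g)" using V0_nn V0_le p_nn g_nn' by (intro mono_onD[OF a_mono]) auto
    also have "\<dots> \<le> F p + F2 g"
    proof (cases "p \<le> \<rho> g")
      case True
      then have "a (p + g) \<le> F2 g" unfolding F2_def using p_nn g_nn'
        by (intro mono_onD[OF a_mono]) auto
      then show ?thesis using F_nn[OF p_nn] by linarith
    next
      case False
      then have "g < \<rho>i p" using \<rho>i(4) p_nn g_nn' by auto
      then have "a (p + g) \<le> F p" unfolding F_def using p_nn g_nn'
        by (intro mono_onD[OF a_mono]) auto
      then show ?thesis using F2_nn[OF g_nn'] by linarith
    qed
    also have "\<dots> \<le> \<sigma>' (\<beta> t0 * norm x0) (t - t0) + F2 g"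
      unfolding \<sigma>'_def p_def[symmetric] using p_nn by simp
    finally show ?thesis unfolding F2g .
  qed
  show ?thesis unfolding WIOS_def
    using bic rfc req classN_gt delta KL' beta bound by blast
qed

theorem lemma2p16:
  fixes U :: "'u::real_normed_vector set" and MU :: "(real \<Rightarrow> 'u) set"
    and D :: "'d set" and MD :: "(real \<Rightarrow> 'd) set"
    and \<phi> :: "real \<Rightarrow> real \<Rightarrow> 'x::real_normed_vector \<Rightarrow> (real \<Rightarrow> 'u) \<Rightarrow> (real \<Rightarrow> 'd) \<Rightarrow> 'x"
    and A\<phi> :: "(real \<times> real \<times> 'x \<times> (real \<Rightarrow> 'u) \<times> (real \<Rightarrow> 'd)) set"
    and \<pi> :: "real \<Rightarrow> 'x \<Rightarrow> (real \<Rightarrow> 'u) \<Rightarrow> (real \<Rightarrow> 'd) \<Rightarrow> real set"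
    and H :: "real \<Rightarrow> 'x \<Rightarrow> 'u \<Rightarrow> 'y::real_normed_vector"
    and V :: "real \<Rightarrow> 'x \<Rightarrow> 'u \<Rightarrow> real"
    and \<gamma> \<delta> :: "real \<Rightarrow> real"
  assumes sys: "control_system U MU D MD \<phi> A\<phi> \<pi> H"
    and bic: "BIC MU MD \<phi> A\<phi>"
    and req: "robust_equilibrium MU MD \<phi> A\<phi> H"
    and rfc: "RFC U MU MD \<phi> A\<phi>"
    and V_nonneg: "\<forall>t\<ge>0. \<forall>x. \<forall>v\<in>U. V t x v \<ge> 0"
    and V_zero: "\<forall>t\<ge>0. V t 0 0 = 0"
    and gamma: "classN \<gamma>" and delta: "classKplus \<delta>"
    and P1: "\<forall>s\<ge>0. \<forall>T\<ge>0. bdd_above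
       {V t (\<phi> t t0 x0 u d) (u t) - (SUP \<tau>\<in>{t0..t}. \<gamma> (\<delta> \<tau> * norm (u \<tau>))) | t t0 x0 u d.
          t \<ge> t0 \<and> norm x0 \<le> s \<and> t0 \<in> {0..T} \<and> d \<in> MD \<and> u \<in> MU \<and> (t,t0,x0,u,d) \<in> A\<phi>}"
    and P2: "\<forall>\<epsilon>>0. \<forall>T\<ge>0. \<exists>\<eta>>0. \<forall>t t0 x0 u d.
          t \<ge> t0 \<and> norm x0 \<le> \<eta> \<and> t0 \<in> {0..T} \<and> d \<in> MD \<and> u \<in> MU \<and> (t,t0,x0,u,d) \<in> A\<phi>
          \<longrightarrow> V t (\<phi> t t0 x0 u d) (u t) - (SUP \<tau>\<in>{t0..t}. \<gamma> (\<delta> \<tau> * norm (u \<tau>))) \<le> \<epsilon>"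
    and P3: "\<forall>\<epsilon>>0. \<forall>T\<ge>0. \<forall>R\<ge>0. \<exists>\<tau>\<^sub>0\<ge>0. \<forall>t t0 x0 u d.
          t \<ge> t0 + \<tau>\<^sub>0 \<and> norm x0 \<le> R \<and> t0 \<in> {0..T} \<and> d \<in> MD \<and> u \<in> MU \<and> (t,t0,x0,u,d) \<in> A\<phi>
          \<longrightarrow> V t (\<phi> t t0 x0 u d) (u t) - (SUP \<tau>\<in>{t0..t}. \<gamma> (\<delta> \<tau> * norm (u \<tau>))) \<le> \<epsilon>"
  shows "(\<exists>\<sigma> \<beta>. classKL \<sigma> \<and> classKplus \<beta> \<and>
            (\<forall>u\<in>MU. \<forall>t0\<ge>0. \<forall>x0. \<forall>d\<in>MD. \<forall>t\<ge>t0. (t,t0,x0,u,d) \<in> A\<phi> \<longrightarrow>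
               V t (\<phi> t t0 x0 u d) (u t)
                 \<le> \<sigma> (\<beta> t0 * norm x0) (t - t0) + (SUP \<tau>\<in>{t0..t}. \<gamma> (\<delta> \<tau> * norm (u \<tau>)))))
       \<and> (\<forall>a. classN a \<and> (\<forall>t\<ge>0. \<forall>x. \<forall>v\<in>U. norm (H t x v) \<le> a (V t x v)) \<longrightarrow>
            (\<forall>\<rho>. classKinf \<rho> \<longrightarrow>
               WIOS U MU MD \<phi> A\<phi> H (\<lambda>s. a (\<gamma> s + \<rho> (\<gamma> s))) \<delta>))"
  proof -
  have p1: "\<exists>\<sigma> \<beta>. classKL \<sigma> \<and> classKplus \<beta> \<and>
            (\<forall>u\<in>MU. \<forall>t0\<ge>0. \<forall>x0. \<forall>d\<in>MD. \<forall>t\<ge>t0. (t,t0,x0,u,d) \<in> A\<phi> \<longrightarrow>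
               V t (\<phi> t t0 x0 u d) (u t)
                 \<le> \<sigma> (\<beta> t0 * norm x0) (t - t0) + (SUP \<tau>\<in>{t0..t}. \<gamma> (\<delta> \<tau> * norm (u \<tau>))))"
    using P1 P2 P3 by (rule part1)
  then obtain \<sigma> \<beta> where sb: "classKL \<sigma>" "classKplus \<beta>"
    "\<forall>u\<in>MU. \<forall>t0\<ge>0. \<forall>x0. \<forall>d\<in>MD. \<forall>t\<ge>t0. (t,t0,x0,u,d) \<in> A\<phi> \<longrightarrow>
               V t (\<phi> t t0 x0 u d) (u t)
                 \<le> \<sigma> (\<beta> t0 * norm x0) (t - t0) + (SUP \<tau>\<in>{t0..t}. \<gamma> (\<delta> \<tau> * norm (u \<tau>)))"
    by (elim exE conjE)
  have p2: "\<forall>a. classN a \<and> (\<forall>t\<ge>0. \<forall>x. \<forall>v\<in>U. norm (H t x v) \<le> a (V t x v)) \<longrightarrow>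
            (\<forall>\<rho>. classKinf \<rho> \<longrightarrow>
               WIOS U MU MD \<phi> A\<phi> H (\<lambda>s. a (\<gamma> s + \<rho> (\<gamma> s))) \<delta>)"
  proof (intro allI impI, elim conjE)
    fix a \<rho>
    assume a: "classN a" "\<forall>t\<ge>0. \<forall>x. \<forall>v\<in>U. norm (H t x v) \<le> a (V t x v)" and r: "classKinf \<rho>"
    show "WIOS U MU MD \<phi> A\<phi> H (\<lambda>s. a (\<gamma> s + \<rho> (\<gamma> s))) \<delta>"
      by (rule part2[OF sys bic req rfc V_nonneg gamma delta sb(1) sb(2) sb(3) a(1) a(2) r])
  qed
  show ?thesis using p1 p2 by blast
qed

end
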